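(* Let $k \geq 1$ and $\Sigma = \{a_0, a_1, \ldots, a_{k-1}\}$. Consider the context-free grammar $G$ with terminal symbols $\Sigma \cup \{\epsilon, +, *, (, )\}$, start symbol $S$, non-terminals $S, E, E_i, Y, Y', Y_i, Y_i', Z, Z_i, P_i, P_i'$ (for $0 \le i < k$), and productions \begin{itemize} \item $S \to Y \mid Z$; \item $E \to Y \mid (Z) \mid (\epsilon + Y') \mid (\epsilon + Z)$; \item $E_i \to Y_i \mid (Z_i) \mid (\epsilon + Y_i') \mid (\epsilon + Z_i)$ for $0 \le i < k$; \item $Y \to P_i$ for each $0 \le i < k$; \item $Y' \to P_i'$ for each $0 \le i < k$; \item $Y_i \to P_j$ for all $0 \le i, j < k$ with $i \neq j$; \item $Y_i' \to P_j'$ for all $0 \le i, j < k$ with $i \neq j$; \item $Z \to P_{n_0}' + P_{n_1}' + \cdots + P_{n_t}'$ for all $t > 0$ and all $0 \le n_0 < n_1 < \cdots < n_t < k$; \item $Z_i \to P_{n_0}' + P_{n_1}' + \cdots + P_{n_t}'$ for all $t > 0$ and all $0 \le n_0 < n_1 < \cdots < n_t < k$ with $n_j \neq i$ for all $0 \le j \le t$; \item $P_i \to a_i \mid a_i E \mid a_i a_j * \mid a_i a_j * E_j$ for all $0 \le i, j < k$; \item $P_i' \to a_i \mid a_i E \mid a_i a_j * \mid a_i a_j * E_j$ for all $0 \le i, j < k$ with $i \neq j$. \end{itemize} Then $G$ is unambiguous, and any two distinct strings generated by $G$ (from $S$), read as regular expressions, denote distinct regular languages.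
   Context: Strings generated by the grammar are interpreted as regular expressions over $\Sigma$ in the usual way: $\epsilon$ denotes the empty word, $+$ is union, juxtaposition is concatenation, $*$ is Kleene star (applied here to the single preceding symbol $a_j$), with the standard precedence (star over concatenation over union) and parentheses for grouping. A context-free grammar is unambiguous if every string it generates has exactly one parse tree. *)

theory Defs
  imports Main
begin

datatype tm = Sym nat | Eps | Plus | Star | LP | RP

datatype nt = NS | NE | NEi nat | NY | NY' | NYi nat | NYi' nat | NZ | NZi nat
  | NP nat | NP' nat

datatype gsym = T tm | N nt

fun sum_rhs :: "nat list \<Rightarrow> gsym list" where
  "sum_rhs [] = []"
| "sum_rhs [n] = [N (NP' n)]"
| "sum_rhs (n # ns) = N (NP' n) # T Plus # sum_rhs ns"

inductive prod :: "nat \<Rightarrow> nt \<Rightarrow> gsym list \<Rightarrow> bool" for k :: nat where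
  S_Y: "prod k NS [N NY]"
| S_Z: "prod k NS [N NZ]"
| E_Y: "prod k NE [N NY]"
| E_Z: "prod k NE [T LP, N NZ, T RP]"
| E_Y': "prod k NE [T LP, T Eps, T Plus, N NY', T RP]"
| E_epsZ: "prod k NE [T LP, T Eps, T Plus, N NZ, T RP]"
| Ei_Y: "i < k \<Longrightarrow> prod k (NEi i) [N (NYi i)]"
| Ei_Z: "i < k \<Longrightarrow> prod k (NEi i) [T LP, N (NZi i), T RP]"
| Ei_Y': "i < k \<Longrightarrow> prod k (NEi i) [T LP, T Eps, T Plus, N (NYi' i), T RP]"
| Ei_epsZ: "i < k \<Longrightarrow> prod k (NEi i) [T LP, T Eps, T Plus, N (NZi i), T RP]"
| Y_P: "i < k \<Longrightarrow> prod k NY [N (NP i)]"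
| Y'_P': "i < k \<Longrightarrow> prod k NY' [N (NP' i)]"
| Yi_P: "i < k \<Longrightarrow> j < k \<Longrightarrow> i \<noteq> j \<Longrightarrow> prod k (NYi i) [N (NP j)]"
| Yi'_P': "i < k \<Longrightarrow> j < k \<Longrightarrow> i \<noteq> j \<Longrightarrow> prod k (NYi' i) [N (NP' j)]"
| Z_sum: "sorted_wrt (<) ns \<Longrightarrow> length ns \<ge> 2 \<Longrightarrow> (\<forall>n\<in>set ns. n < k)
           \<Longrightarrow> prod k NZ (sum_rhs ns)"
| Zi_sum: "i < k \<Longrightarrow> sorted_wrt (<) ns \<Longrightarrow> length ns \<ge> 2 \<Longrightarrow> (\<forall>n\<in>set ns. n < k)
           \<Longrightarrow> i \<notin> set ns \<Longrightarrow> prod k (NZi i) (sum_rhs ns)"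
| P_a: "i < k \<Longrightarrow> j < k \<Longrightarrow> prod k (NP i) [T (Sym i)]"
| P_aE: "i < k \<Longrightarrow> j < k \<Longrightarrow> prod k (NP i) [T (Sym i), N NE]"
| P_aastar: "i < k \<Longrightarrow> j < k \<Longrightarrow> prod k (NP i) [T (Sym i), T (Sym j), T Star]"
| P_aastarE: "i < k \<Longrightarrow> j < k \<Longrightarrow> prod k (NP i) [T (Sym i), T (Sym j), T Star, N (NEi j)]"
| P'_a: "i < k \<Longrightarrow> j < k \<Longrightarrow> i \<noteq> j \<Longrightarrow> prod k (NP' i) [T (Sym i)]"
| P'_aE: "i < k \<Longrightarrow> j < k \<Longrightarrow> i \<noteq> j \<Longrightarrow> prod k (NP' i) [T (Sym i), N NE]"
| P'_aastar: "i < k \<Longrightarrow> j < k \<Longrightarrow> i \<noteq> j \<Longrightarrow> prod k (NP' i) [T (Sym i), T (Sym j), T Star]"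
| P'_aastarE: "i < k \<Longrightarrow> j < k \<Longrightarrow> i \<noteq> j \<Longrightarrow>
     prod k (NP' i) [T (Sym i), T (Sym j), T Star, N (NEi j)]"

datatype ptree = Leaf tm | Node nt "ptree list"

fun root :: "ptree \<Rightarrow> gsym" where
  "root (Leaf t) = T t"
| "root (Node A ts) = N A"

fun yield :: "ptree \<Rightarrow> tm list" where
  "yield (Leaf t) = [t]"
| "yield (Node A ts) = concat (map yield ts)"

inductive valid :: "nat \<Rightarrow> ptree \<Rightarrow> bool" for k :: nat where
  "valid k (Leaf t)"
| "prod k A (map root ts) \<Longrightarrow> (\<forall>t\<in>set ts. valid k t) \<Longrightarrow> valid k (Node A ts)"

definition generates :: "nat \<Rightarrow> tm list \<Rightarrow> bool" where
  "generates k w \<longleftrightarrow> (\<exists>t. valid k t \<and> root t = N NS \<and> yield t = w)"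

definition unambiguous :: "nat \<Rightarrow> bool" where
  "unambiguous k \<longleftrightarrow> (\<forall>t1 t2. valid k t1 \<and> valid k t2 \<and> root t1 = N NS \<and> root t2 = N NS
      \<and> yield t1 = yield t2 \<longrightarrow> t1 = t2)"

text \<open>Languages over Sigma = {a_0,...}; words are lists of letter indices.\<close>
definition conc :: "nat list set \<Rightarrow> nat list set \<Rightarrow> nat list set" where
  "conc A B = {u @ v | u v. u \<in> A \<and> v \<in> B}"

inductive_set kstar :: "nat list set \<Rightarrow> nat list set" for A where
  "[] \<in> kstar A"
| "u \<in> A \<Longrightarrow> v \<in> kstar A \<Longrightarrow> u @ v \<in> kstar A"

inductive re_atom :: "tm list \<Rightarrow> nat list set \<Rightarrow> bool"
  and re_factor :: "tm list \<Rightarrow> nat list set \<Rightarrow> bool"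
  and re_term :: "tm list \<Rightarrow> nat list set \<Rightarrow> bool"
  and re_expr :: "tm list \<Rightarrow> nat list set \<Rightarrow> bool" where
  at_sym: "re_atom [Sym i] {[i]}"
| at_eps: "re_atom [Eps] {[]}"
| at_par: "re_expr w L \<Longrightarrow> re_atom ([LP] @ w @ [RP]) L"
| fa_atom: "re_atom w L \<Longrightarrow> re_factor w L"
| fa_star: "re_atom w L \<Longrightarrow> re_factor (w @ [Star]) (kstar L)"
| te_factor: "re_factor w L \<Longrightarrow> re_term w L"
| te_conc: "re_term w1 L1 \<Longrightarrow> re_factor w2 L2 \<Longrightarrow> re_term (w1 @ w2) (conc L1 L2)"
| ex_term: "re_term w L \<Longrightarrow> re_expr w L"
| ex_union: "re_expr w1 L1 \<Longrightarrow> re_term w2 L2 \<Longrightarrow> re_expr (w1 @ [Plus] @ w2) (L1 \<union> L2)"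

end

theory Submission
  imports Defs
begin


fun nd :: "tm list \<Rightarrow> int" where
  "nd [] = 0" | "nd (LP # w) = nd w + 1" | "nd (RP # w) = nd w - 1" | "nd (x # w) = nd w"

lemma nd_append[simp]: "nd (u @ v) = nd u + nd v"
  by (induct u rule: nd.induct) auto

definition pok :: "tm list \<Rightarrow> bool" where
  "pok w \<longleftrightarrow> (\<forall>n. nd (take n w) \<ge> 0)"

definition noplus :: "tm list \<Rightarrow> bool" where
  "noplus w \<longleftrightarrow> (\<forall>n < length w. w ! n = Plus \<longrightarrow> nd (take n w) > 0)"

lemma pok_prefix: "pok (u @ v) \<Longrightarrow> nd u \<ge> 0"
  unfolding pok_def by (metis append_eq_conv_conj)

lemma noplus_prefix: "noplus (u @ Plus # v) \<Longrightarrow> nd u > 0"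
  unfolding noplus_def by (metis append_eq_conv_conj length_append less_add_same_cancel1 nth_append_length zero_less_Suc list.size(4) add_Suc_right)

lemma pok_append: "pok u \<Longrightarrow> pok v \<Longrightarrow> nd u \<ge> 0 \<Longrightarrow> pok (u @ v)"
  unfolding pok_def
proof (intro allI)
  fix n assume a: "\<forall>n. 0 \<le> nd (take n u)" "\<forall>n. 0 \<le> nd (take n v)" "0 \<le> nd u"
  show "0 \<le> nd (take n (u @ v))"
  proof (cases "n \<le> length u")
    case True then show ?thesis using a by simp
  next
    case False then show ?thesis using a by simp
  qed
qed

lemma pok_single: "x \<noteq> RP \<Longrightarrow> pok [x]"
  unfolding pok_def by (cases x) (auto simp: take_Cons')

lemma pok_snoc: "pok u \<Longrightarrow> nd u \<ge> 1 \<Longrightarrow> pok (u @ [RP])"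
  unfolding pok_def
proof (intro allI)
  fix n assume a: "\<forall>n. 0 \<le> nd (take n u)" "1 \<le> nd u"
  show "0 \<le> nd (take n (u @ [RP]))"
  proof (cases "n \<le> length u")
    case True then show ?thesis using a by simp
  next
    case False then have "take (n - length u) [RP] = [RP]" by (simp add: take_Cons')
    then show ?thesis using a False by simp
  qed
qed

lemma noplus_append: "noplus u \<Longrightarrow> noplus v \<Longrightarrow> nd u = 0 \<Longrightarrow> noplus (u @ v)"
  unfolding noplus_def
proof (intro allI impI)
  fix n assume a: "\<forall>n<length u. u ! n = Plus \<longrightarrow> 0 < nd (take n u)"
    "\<forall>n<length v. v ! n = Plus \<longrightarrow> 0 < nd (take n v)" "nd u = 0"
    and n: "n < length (u @ v)" "(u @ v) ! n = Plus"
  show "0 < nd (take n (u @ v))"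
  proof (cases "n < length u")
    case True then show ?thesis using a n by (simp add: nth_append)
  next
    case False
    then have "v ! (n - length u) = Plus" "n - length u < length v" using n by (auto simp: nth_append)
    then show ?thesis using a False by simp
  qed
qed

lemma noplus_single: "x \<noteq> Plus \<Longrightarrow> noplus [x]"
  unfolding noplus_def by auto

lemma noplus_par: "pok e \<Longrightarrow> noplus (LP # e @ [RP])"
  unfolding noplus_def pok_def
proof (intro allI impI)
  fix n assume a: "\<forall>n. 0 \<le> nd (take n e)" and n: "n < length (LP # e @ [RP])" "(LP # e @ [RP]) ! n = Plus"
  then obtain m where m: "n = Suc m" by (cases n) auto
  then have "m < length e" using n by (auto simp: nth_append split: if_splits)
  then show "0 < nd (take n (LP # e @ [RP]))" using a m by simp
qed

lemma re_struct:
  "(re_atom w L \<longrightarrow> nd w = 0 \<and> pok w \<and> noplus w \<and> w \<noteq> [] \<and> last w \<noteq> Star)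
 \<and> (re_factor w L \<longrightarrow> nd w = 0 \<and> pok w \<and> noplus w \<and> w \<noteq> [])
 \<and> (re_term w L \<longrightarrow> nd w = 0 \<and> pok w \<and> noplus w \<and> w \<noteq> [])
 \<and> (re_expr w L \<longrightarrow> nd w = 0 \<and> pok w \<and> w \<noteq> [])"
proof (induction rule: re_atom_re_factor_re_term_re_expr.induct)
  case (at_sym i) then show ?case by (simp add: pok_single noplus_single)
next
  case at_eps then show ?case by (simp add: pok_single noplus_single)
next
  case (at_par w L)
  have "pok ([LP] @ w)" using pok_append[of "[LP]" w] at_par pok_single by simp
  then have "pok ((LP # w) @ [RP])" using pok_snoc[of "LP # w"] at_par by simp
  then show ?case using at_par by (simp add: noplus_par)
next
  case (fa_atom w L) then show ?case by simp
next
  case (fa_star w L) then show ?case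
    by (simp add: pok_append noplus_append pok_single noplus_single)
next
  case (te_factor w L) then show ?case by simp
next
  case (te_conc w1 L1 w2 L2) then show ?case
    by (simp add: pok_append noplus_append)
next
  case (ex_term w L) then show ?case by simp
next
  case (ex_union w1 L1 w2 L2)
  have "pok [Plus]" by (rule pok_single) simp
  then have "pok (w1 @ [Plus])" using ex_union pok_append[of w1 "[Plus]"] by simp
  then have "pok ((w1 @ [Plus]) @ w2)" using ex_union pok_append[of "w1 @ [Plus]" w2] by simp
  then show ?case using ex_union by simp
qed

lemmas re_atom_struct = re_struct[THEN conjunct1, rule_format]
lemmas re_factor_struct = re_struct[THEN conjunct2, THEN conjunct1, rule_format]
lemmas re_term_struct = re_struct[THEN conjunct2, THEN conjunct2, THEN conjunct1, rule_format]
lemmas re_expr_struct = re_struct[THEN conjunct2, THEN conjunct2, THEN conjunct2, rule_format]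

lemma atom_suffix: "re_atom a L \<Longrightarrow> re_atom (y @ a) L' \<Longrightarrow> y = []"
proof -
  assume A: "re_atom a L" and B: "re_atom (y @ a) L'"
  have ne: "a \<noteq> []" using re_atom_struct[OF A] by simp
  from B show ?thesis
  proof (cases rule: re_atom.cases)
    case (at_sym i) then show ?thesis using ne by (cases y) auto
  next
    case at_eps then show ?thesis using ne by (cases y) auto
  next
    case (at_par e')
    note o = at_par
    from A show ?thesis
    proof (cases rule: re_atom.cases)
      case (at_sym i) then show ?thesis using o by (cases y rule: rev_cases) auto
    next
      case at_eps then show ?thesis using o by (cases y rule: rev_cases) auto
    next
      case (at_par e)
      note at_par2 = at_par
      show ?thesis
      proof (rule ccontr)
        assume "y \<noteq> []"
        have "y @ LP # e = LP # e'" using o at_par2 by simp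
        then obtain y' where y': "y = LP # y'" "e' = y' @ LP # e" using \<open>y \<noteq> []\<close>
          by (cases y) auto
        have "nd e' = 0" "pok e'" using re_expr_struct[OF o(2)] by auto
        moreover have "nd e = 0" using re_expr_struct[OF at_par2(2)] by auto
        ultimately show False using y' pok_prefix[of y' "LP # e"] by simp
      qed
    qed
  qed
qed

lemma factor_suffix: "re_factor f L \<Longrightarrow> re_factor (y @ f) L' \<Longrightarrow> y = []"
proof -
  assume A: "re_factor f L" and B: "re_factor (y @ f) L'"
  from A show ?thesis
  proof (cases rule: re_factor.cases)
    case (fa_atom)
    note a = this
    have l: "last f \<noteq> Star" "f \<noteq> []" using re_atom_struct[OF a(1)] by auto
    from B show ?thesis
    proof (cases rule: re_factor.cases)
      case fa_atom then show ?thesis using atom_suffix a by blast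
    next
      case (fa_star w L2) then show ?thesis using l
        by (metis last_appendR last_snoc)
    qed
  next
    case (fa_star w L1)
    note a = this
    from B show ?thesis
    proof (cases rule: re_factor.cases)
      case fa_atom then show ?thesis using a re_atom_struct[OF fa_atom(1)] by simp
    next
      case (fa_star w' L2) then have "y @ w = w'" using a by simp
      then show ?thesis using atom_suffix a fa_star by blast
    qed
  qed
qed

lemma re_fun:
  "(re_atom w L \<longrightarrow> (\<forall>L'. re_atom w L' \<longrightarrow> L' = L))
 \<and> (re_factor w L \<longrightarrow> (\<forall>L'. re_factor w L' \<longrightarrow> L' = L))
 \<and> (re_term w L \<longrightarrow> (\<forall>L'. re_term w L' \<longrightarrow> L' = L))
 \<and> (re_expr w L \<longrightarrow> (\<forall>L'. re_expr w L' \<longrightarrow> L' = L))"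
proof (induction rule: re_atom_re_factor_re_term_re_expr.induct)
  case (at_sym i) then show ?case by (auto elim: re_atom.cases simp: Cons_eq_append_conv)
next
  case at_eps then show ?case by (auto elim: re_atom.cases simp: Cons_eq_append_conv)
next
  case (at_par w L)
  show ?case
  proof (intro allI impI)
    fix L' assume "re_atom ([LP] @ w @ [RP]) L'"
    then show "L' = L"
    proof (cases rule: re_atom.cases)
      case at_par then show ?thesis using at_par.IH by simp
    qed simp_all
  qed
next
  case (fa_atom w L)
  show ?case
  proof (intro allI impI)
    fix L' assume "re_factor w L'"
    then show "L' = L"
    proof (cases rule: re_factor.cases)
      case fa_atom then show ?thesis using fa_atom.IH by blast
    next
      case (fa_star w' L2) then show ?thesis using re_atom_struct[OF fa_atom.hyps] by simp
    qed
  qed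
next
  case (fa_star w L)
  show ?case
  proof (intro allI impI)
    fix L' assume "re_factor (w @ [Star]) L'"
    then show "L' = kstar L"
    proof (cases rule: re_factor.cases)
      case fa_atom then show ?thesis using re_atom_struct[OF fa_atom(1)] by simp
    next
      case (fa_star L2) then show ?thesis using fa_star.IH by auto
    qed
  qed
next
  case (te_factor w L)
  show ?case
  proof (intro allI impI)
    fix L' assume "re_term w L'"
    then show "L' = L"
    proof (cases rule: re_term.cases)
      case te_factor then show ?thesis using te_factor.IH by blast
    next
      case (te_conc w1 L1 w2 L2)
      then have "w1 = []" using factor_suffix[OF te_conc(4), of w1] te_factor.hyps by simp
      then show ?thesis using re_term_struct[OF te_conc(3)] by simp
    qed
  qed
next
  case (te_conc w1 L1 w2 L2)
  show ?case
  proof (intro allI impI)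
    fix L' assume "re_term (w1 @ w2) L'"
    then show "L' = conc L1 L2"
    proof (cases rule: re_term.cases)
      case te_factor
      then have "w1 = []" using factor_suffix[OF te_conc.hyps(2), of w1] by simp
      then show ?thesis using re_term_struct[OF te_conc.hyps(1)] by simp
    next
      case (te_conc w1' L1' w2' L2')
      note b = this
      have "w2 = w2'"
      proof -
        from b(1) have "w1 @ w2 = w1' @ w2'" by simp
        then obtain us where "(w1 = w1' @ us \<and> w2' = us @ w2) \<or> (w1 @ us = w1' \<and> w2 = us @ w2')"
          by (auto simp: append_eq_append_conv2)
        then show ?thesis
        proof
          assume h: "w1 = w1' @ us \<and> w2' = us @ w2"
          then have "us = []" using factor_suffix[OF te_conc.hyps(2), of us] b(4) by simp
          then show ?thesis using h by simp
        next
          assume h: "w1 @ us = w1' \<and> w2 = us @ w2'"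
          then have "us = []" using factor_suffix[OF b(4), of us] te_conc.hyps(2) by simp
          then show ?thesis using h by simp
        qed
      qed
      then have "w1 = w1'" using b(1) by simp
      then show ?thesis using b te_conc.IH \<open>w2 = w2'\<close> by auto
    qed
  qed
next
  case (ex_term w L)
  show ?case
  proof (intro allI impI)
    fix L' assume "re_expr w L'"
    then show "L' = L"
    proof (cases rule: re_expr.cases)
      case ex_term then show ?thesis using ex_term.IH by blast
    next
      case (ex_union w1 L1 w2 L2)
      have "nd w1 = 0" using re_expr_struct[OF ex_union(3)] by simp
      moreover have "noplus (w1 @ Plus # w2)" using re_term_struct[OF ex_term.hyps] ex_union by simp
      ultimately show ?thesis using noplus_prefix by fastforce
    qed
  qed
next
  case (ex_union w1 L1 w2 L2)
  show ?case
  proof (intro allI impI)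
    fix L' assume "re_expr (w1 @ [Plus] @ w2) L'"
    then show "L' = L1 \<union> L2"
    proof (cases rule: re_expr.cases)
      case ex_term
      have "nd w1 = 0" using re_expr_struct[OF ex_union.hyps(1)] by simp
      moreover have "noplus (w1 @ Plus # w2)" using re_term_struct[OF ex_term] by simp
      ultimately show ?thesis using noplus_prefix by fastforce
    next
      case (ex_union w1' L1' w2' L2')
      note b = this
      have "w1 = w1'"
      proof (rule ccontr)
        assume ne: "w1 \<noteq> w1'"
        from b(1) have eq: "w1 @ Plus # w2 = w1' @ Plus # w2'" by simp
        have n1: "nd w1 = 0" "nd w1' = 0" using re_expr_struct[OF ex_union.hyps(1)] re_expr_struct[OF b(3)] by auto
        have t1: "noplus w2" "noplus w2'" using re_term_struct[OF ex_union.hyps(2)] re_term_struct[OF b(4)] by auto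
        from iffD1[OF append_eq_append_conv2 eq] obtain us where "(w1 = w1' @ us \<and> us @ Plus # w2 = Plus # w2') \<or> (w1 @ us = w1' \<and> Plus # w2 = us @ Plus # w2')"
          by (elim exE) (erule that)
        then show False
        proof
          assume h: "w1 = w1' @ us \<and> us @ Plus # w2 = Plus # w2'"
          then have "us \<noteq> []" using ne by auto
          then obtain x where "us = Plus # x" "w2' = x @ Plus # w2" using h by (cases us) auto
          then show False using h n1 t1 noplus_prefix[of x w2] by simp
        next
          assume h: "w1 @ us = w1' \<and> Plus # w2 = us @ Plus # w2'"
          then have "us \<noteq> []" using ne by auto
          then obtain x where "us = Plus # x" "w2 = x @ Plus # w2'" using h by (cases us) auto
          moreover have "nd w1' = nd w1 + nd x" using h \<open>us = Plus # x\<close> by auto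
          ultimately show False using h n1 t1 noplus_prefix[of x w2'] by simp
        qed
      qed
      then show ?thesis using b ex_union.IH by auto
    qed
  qed
qed

lemma re_expr_fun: "re_expr w L \<Longrightarrow> re_expr w L' \<Longrightarrow> L' = L"
  using re_fun by blast



definition comb :: "gsym list \<Rightarrow> nat list set list \<Rightarrow> nat list set" where
  "comb rs cs = (if length rs = 1 then cs!0
     else if length rs = 2 then conc (cs!0) (cs!1)
     else if rs!0 = T LP \<and> length rs = 3 then cs!1
     else if rs!0 = T LP then insert [] (cs!3)
     else if rs!2 = T Star then (if length rs = 3 then conc (cs!0) (kstar (cs!1))
                                 else conc (conc (cs!0) (kstar (cs!1))) (cs!3))
     else \<Union>{cs!n | n. n < length rs \<and> even n})"

fun sem :: "ptree \<Rightarrow> nat list set" where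
  "sem (Leaf (Sym i)) = {[i]}"
| "sem (Leaf x) = {}"
| "sem (Node A ts) = comb (map root ts) (map sem ts)"

fun sumt :: "ptree list \<Rightarrow> ptree list" where
  "sumt [] = []"
| "sumt [q] = [q]"
| "sumt (q # qs) = q # Leaf Plus # sumt qs"

lemma sem1[simp]: "sem (Node A [t]) = sem t"
  by (simp add: comb_def)
lemma sem2[simp]: "sem (Node A [Leaf (Sym i), t]) = conc {[i]} (sem t)"
  by (simp add: comb_def)
lemma sem3[simp]: "sem (Node A [Leaf LP, t, Leaf RP]) = sem t"
  by (simp add: comb_def)
lemma sem4[simp]: "sem (Node A [Leaf LP, Leaf Eps, Leaf Plus, t, Leaf RP]) = insert [] (sem t)"
  by (simp add: comb_def)
lemma sem5[simp]: "sem (Node A [Leaf (Sym i), Leaf (Sym j), Leaf Star]) = conc {[i]} (kstar {[j]})"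
  by (simp add: comb_def)
lemma sem6[simp]: "sem (Node A [Leaf (Sym i), Leaf (Sym j), Leaf Star, t]) = conc (conc {[i]} (kstar {[j]})) (sem t)"
  by (simp add: comb_def)

lemma length_sumt: "qs \<noteq> [] \<Longrightarrow> length (sumt qs) = 2 * length qs - 1"
  by (induct qs rule: sumt.induct) auto

lemma nth_sumt_even: "m < length qs \<Longrightarrow> sumt qs ! (2 * m) = qs ! m"
proof (induct qs arbitrary: m rule: sumt.induct)
  case (3 q v va)
  then show ?case by (cases m) auto
qed auto

lemma sumt_hd: "sumt (q # qs) ! 0 = q"
  by (cases qs) auto

lemma sumt_2: "length qs \<ge> 2 \<Longrightarrow> sumt qs ! 1 = Leaf Plus"
  by (cases qs rule: sumt.cases) auto

lemma set_sumt: "set qs \<subseteq> set (sumt qs)"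
  by (induct qs rule: sumt.induct) auto

lemma sem_sumt:
  assumes "length qs \<ge> 2" "\<forall>q\<in>set qs. \<exists>A us. q = Node A us"
  shows "sem (Node B (sumt qs)) = \<Union>(sem ` set qs)"
proof -
  obtain q qs' where qq: "qs = q # qs'" using assms by (cases qs) auto
  have len: "length (sumt qs) = 2 * length qs - 1" using assms length_sumt[of qs] by (cases qs) auto
  have l2: "2 < length (sumt qs)" using len assms by simp
  have "sumt qs ! 0 = q" using qq by (simp add: sumt_hd)
  moreover have "map root (sumt qs) ! 0 = root (sumt qs ! 0)" by (rule nth_map) (use l2 in arith)
  ultimately have r0: "map root (sumt qs) ! 0 \<noteq> T LP"
    using assms(2) qq by auto
  have "sumt qs ! (2*1) = qs ! 1" using nth_sumt_even[of 1 qs] assms by simp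
  moreover have "qs ! 1 \<in> set qs" using assms(1) by simp
  moreover have "map root (sumt qs) ! 2 = root (sumt qs ! 2)" by (rule nth_map) (use l2 in arith)
  ultimately have r2: "map root (sumt qs) ! 2 \<noteq> T Star"
    using assms(2) by force
  have evn: "{map sem (sumt qs) ! n | n. n < length (map root (sumt qs)) \<and> even n} = sem ` set qs"
  proof -
    have "{map sem (sumt qs) ! n | n. n < length (sumt qs) \<and> even n} = {sem (qs ! m) | m. m < length qs}"
    proof (intro set_eqI iffI)
      fix x assume "x \<in> {map sem (sumt qs) ! n | n. n < length (sumt qs) \<and> even n}"
      then obtain n where "x = map sem (sumt qs) ! n" "n < length (sumt qs)" "even n" by blast
      then obtain m where "n = 2 * m" by (auto elim: evenE)
      then show "x \<in> {sem (qs ! m) | m. m < length qs}"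
        using \<open>x = _\<close> \<open>n < _\<close> len nth_sumt_even[of m qs] by auto
    next
      fix x assume "x \<in> {sem (qs ! m) | m. m < length qs}"
      then obtain m where "x = sem (qs ! m)" "m < length qs" by blast
      then show "x \<in> {map sem (sumt qs) ! n | n. n < length (sumt qs) \<and> even n}"
        using len nth_sumt_even[of m qs]
        by (auto intro!: exI[of _ "2*m"])
    qed
    also have "\<dots> = sem ` set qs" by (auto simp: in_set_conv_nth) (metis image_eqI nth_mem)
    finally show ?thesis by simp
  qed
  show ?thesis
    using len assms r0 r2 evn by (auto simp: comb_def)
qed

lemma root_T[simp]: "root t = T x \<longleftrightarrow> t = Leaf x" by (cases t) auto

lemma valid_Node_iff: "valid k (Node A ts) \<longleftrightarrow> prod k A (map root ts) \<and> (\<forall>x\<in>set ts. valid k x)"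
  by (auto elim: valid.cases intro: valid.intros)

lemma inv_node: "valid k t \<Longrightarrow> root t = N A \<Longrightarrow> \<exists>ts. t = Node A ts \<and> prod k A (map root ts) \<and> (\<forall>x\<in>set ts. valid k x)"
  by (cases t) (auto simp: valid_Node_iff)

lemma inv_sum: "map root ts = sum_rhs ns \<Longrightarrow> ns \<noteq> [] \<Longrightarrow> \<exists>qs. ts = sumt qs \<and> map root qs = map (\<lambda>n. N (NP' n)) ns"
proof (induct ns arbitrary: ts rule: sum_rhs.induct)
  case 1 then show ?case by simp
next
  case (2 n) then show ?case by (auto simp: map_eq_Cons_conv intro!: exI[of _ ts])
next
  case (3 n v va)
  then obtain x y ts' where ts: "ts = x # Leaf Plus # ts'" "root x = N (NP' n)" "map root ts' = sum_rhs (v # va)"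
    by (auto simp: map_eq_Cons_conv)
  then obtain qs where "ts' = sumt qs" "map root qs = map (\<lambda>n. N (NP' n)) (v # va)" using 3 by blast
  then show ?case using ts by (intro exI[of _ "x # qs"]) (cases qs; auto)
qed

lemma inv_P:
  assumes "valid k t" "root t = N (NP i) \<or> root t = N (NP' i)"
  shows "\<exists>A. root t = N A \<and> (A = NP i \<or> A = NP' i) \<and>
  (t = Node A [Leaf (Sym i)] \<or>
   (\<exists>e. t = Node A [Leaf (Sym i), e] \<and> valid k e \<and> root e = N NE) \<or>
   (\<exists>j. (A = NP' i \<longrightarrow> j \<noteq> i) \<and> t = Node A [Leaf (Sym i), Leaf (Sym j), Leaf Star]) \<or>
   (\<exists>j e. (A = NP' i \<longrightarrow> j \<noteq> i) \<and> t = Node A [Leaf (Sym i), Leaf (Sym j), Leaf Star, e] \<and> valid k e \<and> root e = N (NEi j)))"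
proof -
  from assms(2) obtain A where A: "root t = N A" "A = NP i \<or> A = NP' i" by blast
  from inv_node[OF assms(1) A(1)] obtain ts where ts: "t = Node A ts" "prod k A (map root ts)" "\<forall>x\<in>set ts. valid k x"
    by blast
  from ts(2) A(2) have "ts = [Leaf (Sym i)] \<or>
   (\<exists>e. ts = [Leaf (Sym i), e] \<and> root e = N NE) \<or>
   (\<exists>j. (A = NP' i \<longrightarrow> j \<noteq> i) \<and> ts = [Leaf (Sym i), Leaf (Sym j), Leaf Star]) \<or>
   (\<exists>j e. (A = NP' i \<longrightarrow> j \<noteq> i) \<and> ts = [Leaf (Sym i), Leaf (Sym j), Leaf Star, e] \<and> root e = N (NEi j))"
    by (cases rule: prod.cases) (auto simp: map_eq_Cons_conv)
  then show ?thesis using ts A by auto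
qed

lemma inv_E:
  assumes "valid k t" "root t = N NE"
  shows "(\<exists>p l. t = Node NE [Node NY [p]] \<and> valid k p \<and> root p = N (NP l)) \<or>
 (\<exists>z. t = Node NE [Leaf LP, z, Leaf RP] \<and> valid k z \<and> root z = N NZ) \<or>
 (\<exists>p l. t = Node NE [Leaf LP, Leaf Eps, Leaf Plus, Node NY' [p], Leaf RP] \<and> valid k p \<and> root p = N (NP' l)) \<or>
 (\<exists>z. t = Node NE [Leaf LP, Leaf Eps, Leaf Plus, z, Leaf RP] \<and> valid k z \<and> root z = N NZ)"
proof -
  from inv_node[OF assms] obtain ts where ts: "t = Node NE ts" "prod k NE (map root ts)" "\<forall>x\<in>set ts. valid k x"
    by blast
  from ts(2) have "(\<exists>y. ts = [y] \<and> root y = N NY) \<or>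
    (\<exists>z. ts = [Leaf LP, z, Leaf RP] \<and> root z = N NZ) \<or>
    (\<exists>y. ts = [Leaf LP, Leaf Eps, Leaf Plus, y, Leaf RP] \<and> root y = N NY') \<or>
    (\<exists>z. ts = [Leaf LP, Leaf Eps, Leaf Plus, z, Leaf RP] \<and> root z = N NZ)"
    by (cases rule: prod.cases) (auto simp: map_eq_Cons_conv)
  then show ?thesis
  proof (elim disjE exE conjE)
    fix y assume y: "ts = [y]" "root y = N NY"
    then have vy: "valid k y" using ts by simp
    from inv_node[OF vy y(2)] obtain us where us: "y = Node NY us" "prod k NY (map root us)" "\<forall>x\<in>set us. valid k x"
      by blast
    from us(2) obtain p l where "us = [p]" "root p = N (NP l)"
      by (cases rule: prod.cases) (auto simp: map_eq_Cons_conv)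
    then show ?thesis using ts y us by auto
  next
    fix y assume y: "ts = [Leaf LP, Leaf Eps, Leaf Plus, y, Leaf RP]" "root y = N NY'"
    then have vy: "valid k y" using ts by simp
    from inv_node[OF vy y(2)] obtain us where us: "y = Node NY' us" "prod k NY' (map root us)" "\<forall>x\<in>set us. valid k x"
      by blast
    from us(2) obtain p l where "us = [p]" "root p = N (NP' l)"
      by (cases rule: prod.cases) (auto simp: map_eq_Cons_conv)
    then show ?thesis using ts y us by auto
  qed (use ts in auto)
qed

lemma inv_Ei:
  assumes "valid k t" "root t = N (NEi x)"
  shows "(\<exists>p l. l \<noteq> x \<and> t = Node (NEi x) [Node (NYi x) [p]] \<and> valid k p \<and> root p = N (NP l)) \<or>
 (\<exists>z. t = Node (NEi x) [Leaf LP, z, Leaf RP] \<and> valid k z \<and> root z = N (NZi x)) \<or>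
 (\<exists>p l. l \<noteq> x \<and> t = Node (NEi x) [Leaf LP, Leaf Eps, Leaf Plus, Node (NYi' x) [p], Leaf RP] \<and> valid k p \<and> root p = N (NP' l)) \<or>
 (\<exists>z. t = Node (NEi x) [Leaf LP, Leaf Eps, Leaf Plus, z, Leaf RP] \<and> valid k z \<and> root z = N (NZi x))"
proof -
  from inv_node[OF assms] obtain ts where ts: "t = Node (NEi x) ts" "prod k (NEi x) (map root ts)" "\<forall>x\<in>set ts. valid k x"
    by blast
  from ts(2) have "(\<exists>y. ts = [y] \<and> root y = N (NYi x)) \<or>
    (\<exists>z. ts = [Leaf LP, z, Leaf RP] \<and> root z = N (NZi x)) \<or>
    (\<exists>y. ts = [Leaf LP, Leaf Eps, Leaf Plus, y, Leaf RP] \<and> root y = N (NYi' x)) \<or>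
    (\<exists>z. ts = [Leaf LP, Leaf Eps, Leaf Plus, z, Leaf RP] \<and> root z = N (NZi x))"
    by (cases rule: prod.cases) (auto simp: map_eq_Cons_conv)
  then show ?thesis
  proof (elim disjE exE conjE)
    fix y assume y: "ts = [y]" "root y = N (NYi x)"
    then have vy: "valid k y" using ts by simp
    from inv_node[OF vy y(2)] obtain us where us: "y = Node (NYi x) us" "prod k (NYi x) (map root us)" "\<forall>x\<in>set us. valid k x"
      by blast
    from us(2) obtain p l where "us = [p]" "root p = N (NP l)" "l \<noteq> x"
      by (cases rule: prod.cases) (auto simp: map_eq_Cons_conv)
    then show ?thesis using ts y us by auto
  next
    fix y assume y: "ts = [Leaf LP, Leaf Eps, Leaf Plus, y, Leaf RP]" "root y = N (NYi' x)"
    then have vy: "valid k y" using ts by simp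
    from inv_node[OF vy y(2)] obtain us where us: "y = Node (NYi' x) us" "prod k (NYi' x) (map root us)" "\<forall>x\<in>set us. valid k x"
      by blast
    from us(2) obtain p l where "us = [p]" "root p = N (NP' l)" "l \<noteq> x"
      by (cases rule: prod.cases) (auto simp: map_eq_Cons_conv)
    then show ?thesis using ts y us by auto
  qed (use ts in auto)
qed

lemma inv_Z:
  assumes "valid k t" "root t = N A" "A = NZ \<or> A = NZi x"
  shows "\<exists>qs ns. t = Node A (sumt qs) \<and> length qs \<ge> 2 \<and> map root qs = map (\<lambda>n. N (NP' n)) ns
     \<and> sorted_wrt (<) ns \<and> (\<forall>q\<in>set qs. valid k q) \<and> (A = NZi x \<longrightarrow> x \<notin> set ns)"
proof -
  from inv_node[OF assms(1,2)] obtain ts where ts: "t = Node A ts" "prod k A (map root ts)" "\<forall>x\<in>set ts. valid k x"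
    by blast
  from ts(2) assms(3) obtain ns where ns: "map root ts = sum_rhs ns" "sorted_wrt (<) ns" "length ns \<ge> 2"
     "A = NZi x \<longrightarrow> x \<notin> set ns"
    by (cases rule: prod.cases) auto
  from inv_sum[OF ns(1)] ns(3) obtain qs where qs: "ts = sumt qs" "map root qs = map (\<lambda>n. N (NP' n)) ns"
    by fastforce
  have "length qs = length ns" using arg_cong[OF qs(2), of length] by simp
  then show ?thesis using qs ns ts set_sumt[of qs] by (intro exI[of _ qs] exI[of _ ns]) auto
qed

lemma inv_S:
  assumes "valid k t" "root t = N NS"
  shows "(\<exists>p l. t = Node NS [Node NY [p]] \<and> valid k p \<and> root p = N (NP l)) \<or>
    (\<exists>z. t = Node NS [z] \<and> valid k z \<and> root z = N NZ)"
proof -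
  from inv_node[OF assms] obtain ts where ts: "t = Node NS ts" "prod k NS (map root ts)" "\<forall>x\<in>set ts. valid k x"
    by blast
  from ts(2) have "(\<exists>y. ts = [y] \<and> root y = N NY) \<or> (\<exists>z. ts = [z] \<and> root z = N NZ)"
    by (cases rule: prod.cases) (auto simp: map_eq_Cons_conv)
  then show ?thesis
  proof (elim disjE exE conjE)
    fix y assume y: "ts = [y]" "root y = N NY"
    then have vy: "valid k y" using ts by simp
    from inv_node[OF vy y(2)] obtain us where us: "y = Node NY us" "prod k NY (map root us)" "\<forall>x\<in>set us. valid k x"
      by blast
    from us(2) obtain p l where "us = [p]" "root p = N (NP l)"
      by (cases rule: prod.cases) (auto simp: map_eq_Cons_conv)
    then show ?thesis using ts y us by auto
  qed (use ts in auto)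
qed



declare sem.simps[simp del]
lemma sem_sym[simp]: "sem (Leaf (Sym i)) = {[i]}" by (simp add: sem.simps)

lemma size_child: "x \<in> set ts \<Longrightarrow> size x < size (Node A ts)"
  using size_list_estimation'[of x ts "size x" size] by simp

lemma conc_assoc: "conc (conc A B) C = conc A (conc B C)"
  unfolding conc_def by (auto, metis append.assoc, metis append.assoc)

lemma term_app: "re_term w2 L2 \<Longrightarrow> re_term w1 L1 \<Longrightarrow> re_term (w1 @ w2) (conc L1 L2)"
proof (induct "length w2" arbitrary: w2 L2 rule: less_induct)
  case less
  from less.prems(1) show ?case
  proof (cases rule: re_term.cases)
    case te_factor then show ?thesis using less.prems(2) te_conc by blast
  next
    case (te_conc w21 L21 w22 L22)
    have "w22 \<noteq> []" using re_factor_struct[OF te_conc(4)] by simp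
    then have "length w21 < length w2" using te_conc by simp
    then have "re_term (w1 @ w21) (conc L1 L21)" using less te_conc by blast
    then have "re_term ((w1 @ w21) @ w22) (conc (conc L1 L21) L22)" using te_conc(4) re_atom_re_factor_re_term_re_expr.te_conc by blast
    then show ?thesis using te_conc by (simp add: conc_assoc)
  qed
qed

lemma expr_app: "re_expr w2 L2 \<Longrightarrow> re_term w1 L1 \<Longrightarrow> re_expr (w1 @ [Plus] @ w2) (L1 \<union> L2)"
proof (induct "length w2" arbitrary: w2 L2 rule: less_induct)
  case less
  from less.prems(1) show ?case
  proof (cases rule: re_expr.cases)
    case ex_term then show ?thesis
      using re_atom_re_factor_re_term_re_expr.ex_union[OF re_atom_re_factor_re_term_re_expr.ex_term[OF less.prems(2)]] by simp
  next
    case (ex_union w21 L21 w22 L22)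
    then have "length w21 < length w2" by simp
    then have "re_expr (w1 @ [Plus] @ w21) (L1 \<union> L21)" using less ex_union by blast
    then have "re_expr ((w1 @ [Plus] @ w21) @ [Plus] @ w22) ((L1 \<union> L21) \<union> L22)"
      using ex_union(4) re_atom_re_factor_re_term_re_expr.ex_union by blast
    then show ?thesis using ex_union by (simp add: Un_assoc)
  qed
qed

lemma sum_re: "qs \<noteq> [] \<Longrightarrow> (\<forall>q\<in>set qs. re_term (yield q) (sem q)) \<Longrightarrow>
   re_expr (concat (map yield (sumt qs))) (\<Union>(sem ` set qs))"
proof (induct qs rule: sumt.induct)
  case 1 then show ?case by simp
next
  case (2 q) then show ?case by (simp add: ex_term)
next
  case (3 q v va)
  have "re_expr (concat (map yield (sumt (v # va)))) (\<Union>(sem ` set (v # va)))" using 3 by simp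
  then have "re_expr (yield q @ [Plus] @ concat (map yield (sumt (v # va)))) (sem q \<union> \<Union>(sem ` set (v # va)))"
    using expr_app 3 by simp
  then show ?case by simp
qed

lemma atom_term: "re_atom w L \<Longrightarrow> re_term w L"
  by (intro te_factor fa_atom)

lemma sym_term: "re_term [Sym i] {[i]}"
  by (intro atom_term at_sym)

definition termlike :: "nt \<Rightarrow> bool" where
  "termlike A \<longleftrightarrow> (\<exists>i. A = NP i \<or> A = NP' i \<or> A = NEi i) \<or> A = NE"
definition exprlike :: "nt \<Rightarrow> bool" where
  "exprlike A \<longleftrightarrow> (\<exists>i. A = NZi i) \<or> A = NZ \<or> A = NS"

lemma Zsem:
  assumes "length qs \<ge> 2" "map root qs = map (\<lambda>n. N (NP' n)) ns"
  shows "sem (Node B (sumt qs)) = \<Union>(sem ` set qs)"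
proof (rule sem_sumt[OF assms(1)])
  show "\<forall>q\<in>set qs. \<exists>A us. q = Node A us"
  proof
    fix q assume "q \<in> set qs"
    then have "root q \<in> set (map root qs)" by simp
    then have "\<exists>n. root q = N (NP' n)" using assms(2) by auto
    then show "\<exists>A us. q = Node A us" by (cases q) auto
  qed
qed

lemma Zroots: "map root qs = map (\<lambda>n. N (NP' n)) ns \<Longrightarrow> q \<in> set qs \<Longrightarrow> \<exists>n\<in>set ns. root q = N (NP' n)"
proof -
  assume a: "map root qs = map (\<lambda>n. N (NP' n)) ns" "q \<in> set qs"
  then have "root q \<in> set (map (\<lambda>n. N (NP' n)) ns)" by (metis image_eqI list.set_map)
  then show ?thesis by auto
qed

lemma re_ok:
  "valid k t \<Longrightarrow> root t = N A \<Longrightarrow> (termlike A \<longrightarrow> re_term (yield t) (sem t)) \<and> (exprlike A \<longrightarrow> re_expr (yield t) (sem t))"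
proof (induct t arbitrary: A rule: measure_induct_rule[of size])
  case (less t)
  have Pcase: "re_term (yield t) (sem t)" if "root t = N (NP i) \<or> root t = N (NP' i)" for i
  proof -
    from inv_P[OF less.prems(1) that] obtain B where B: "root t = N B"
      "t = Node B [Leaf (Sym i)] \<or>
   (\<exists>e. t = Node B [Leaf (Sym i), e] \<and> valid k e \<and> root e = N NE) \<or>
   (\<exists>j. (B = NP' i \<longrightarrow> j \<noteq> i) \<and> t = Node B [Leaf (Sym i), Leaf (Sym j), Leaf Star]) \<or>
   (\<exists>j e. (B = NP' i \<longrightarrow> j \<noteq> i) \<and> t = Node B [Leaf (Sym i), Leaf (Sym j), Leaf Star, e] \<and> valid k e \<and> root e = N (NEi j))"
      by blast
    from B(2) show ?thesis
    proof (elim disjE exE conjE)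
      assume "t = Node B [Leaf (Sym i)]" then show ?thesis by (simp add: sym_term)
    next
      fix e assume e: "t = Node B [Leaf (Sym i), e]" "valid k e" "root e = N NE"
      then have "re_term (yield e) (sem e)" using less.hyps[of e NE] by (simp add: termlike_def)
      then show ?thesis using e term_app[OF _ sym_term] by simp
    next
      fix j assume e: "t = Node B [Leaf (Sym i), Leaf (Sym j), Leaf Star]"
      have "re_factor [Sym j, Star] (kstar {[j]})" using fa_star[OF at_sym[of j]] by simp
      then have "re_term ([Sym i] @ [Sym j, Star]) (conc {[i]} (kstar {[j]}))" using te_conc[OF sym_term] by blast
      then show ?thesis using e by simp
    next
      fix j e assume e: "t = Node B [Leaf (Sym i), Leaf (Sym j), Leaf Star, e]" "valid k e" "root e = N (NEi j)"
      have "re_factor [Sym j, Star] (kstar {[j]})" using fa_star[OF at_sym[of j]] by simp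
      then have "re_term ([Sym i] @ [Sym j, Star]) (conc {[i]} (kstar {[j]}))" using te_conc[OF sym_term] by blast
      moreover have "re_term (yield e) (sem e)" using less.hyps[of e "NEi j"] e by (simp add: termlike_def)
      ultimately show ?thesis using e term_app by fastforce
    qed
  qed
  have Zcase: "re_expr (yield t) (sem t)" if "root t = N B" "B = NZ \<or> B = NZi x" for B x
  proof -
    from inv_Z[OF less.prems(1) that] obtain qs ns where Z: "t = Node B (sumt qs)" "length qs \<ge> 2"
      "map root qs = map (\<lambda>n. N (NP' n)) ns" "\<forall>q\<in>set qs. valid k q" by blast
    have "\<forall>q\<in>set qs. re_term (yield q) (sem q)"
    proof
      fix q assume q: "q \<in> set qs"
      obtain n where n: "root q = N (NP' n)" using Zroots[OF Z(3) q] by blast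
      have "size q < size t" using Z(1) set_sumt[of qs] q size_child by blast
      then show "re_term (yield q) (sem q)" using less.hyps[of q "NP' n"] Z(4) q n by (simp add: termlike_def)
    qed
    moreover have "qs \<noteq> []" using Z(2) by auto
    ultimately show ?thesis using Z sum_re[of qs] Zsem[OF Z(2,3)] by auto
  qed
  have Ecase: "re_term (yield t) (sem t)" if E: "\<exists>p l. t = Node B [Node C [p]] \<and> valid k p \<and> root p = N (NP l) \<or>
      (\<exists>z. t = Node B [Leaf LP, z, Leaf RP] \<and> valid k z \<and> root z = N D) \<or>
      t = Node B [Leaf LP, Leaf Eps, Leaf Plus, Node C' [p], Leaf RP] \<and> valid k p \<and> root p = N (NP' l) \<or>
      (\<exists>z. t = Node B [Leaf LP, Leaf Eps, Leaf Plus, z, Leaf RP] \<and> valid k z \<and> root z = N D)"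
     "exprlike D" for B C C' D
  proof -
    from E(1) obtain p l where E1: "t = Node B [Node C [p]] \<and> valid k p \<and> root p = N (NP l) \<or>
      (\<exists>z. t = Node B [Leaf LP, z, Leaf RP] \<and> valid k z \<and> root z = N D) \<or>
      t = Node B [Leaf LP, Leaf Eps, Leaf Plus, Node C' [p], Leaf RP] \<and> valid k p \<and> root p = N (NP' l) \<or>
      (\<exists>z. t = Node B [Leaf LP, Leaf Eps, Leaf Plus, z, Leaf RP] \<and> valid k z \<and> root z = N D)" by blast
    then show ?thesis
    proof (elim disjE exE conjE)
      assume p: "t = Node B [Node C [p]]" "valid k p" "root p = N (NP l)"
      then show ?thesis using less.hyps[of p "NP l"] by (simp add: termlike_def)
    next
      fix z assume z: "t = Node B [Leaf LP, z, Leaf RP]" "valid k z" "root z = N D"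
      then have "re_expr (yield z) (sem z)" using less.hyps[of z D] E(2) by simp
      then have "re_atom ([LP] @ yield z @ [RP]) (sem z)" by (rule at_par)
      then show ?thesis using z by (simp add: atom_term)
    next
      assume p: "t = Node B [Leaf LP, Leaf Eps, Leaf Plus, Node C' [p], Leaf RP]" "valid k p" "root p = N (NP' l)"
      then have "re_term (yield p) (sem p)" using less.hyps[of p "NP' l"] by (simp add: termlike_def)
      then have "re_expr ([Eps] @ [Plus] @ yield p) ({[]} \<union> sem p)"
        using ex_union[OF ex_term[OF atom_term[OF at_eps]]] by blast
      then have "re_atom ([LP] @ ([Eps] @ [Plus] @ yield p) @ [RP]) ({[]} \<union> sem p)" by (rule at_par)
      then show ?thesis using p by (simp add: atom_term)
    next
      fix z assume z: "t = Node B [Leaf LP, Leaf Eps, Leaf Plus, z, Leaf RP]" "valid k z" "root z = N D"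
      then have "re_expr (yield z) (sem z)" using less.hyps[of z D] E(2) by simp
      then have "re_expr ([Eps] @ [Plus] @ yield z) ({[]} \<union> sem z)"
        using expr_app[OF _ atom_term[OF at_eps]] by blast
      then have "re_atom ([LP] @ ([Eps] @ [Plus] @ yield z) @ [RP]) ({[]} \<union> sem z)" by (rule at_par)
      then show ?thesis using z by (simp add: atom_term)
    qed
  qed
  show ?case
  proof (intro conjI impI)
    assume "termlike A"
    then consider i where "A = NP i \<or> A = NP' i" | i where "A = NEi i" | "A = NE" unfolding termlike_def by blast
    then show "re_term (yield t) (sem t)"
    proof cases
      case 1 then show ?thesis using Pcase less.prems by blast
    next
      case (2 i)
      show ?thesis
        by (rule Ecase[where C = "NYi i" and C' = "NYi' i" and D = "NZi i"]) (use inv_Ei[OF less.prems(1)] less.prems(2) 2 in \<open>auto simp: exprlike_def\<close>)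
    next
      case 3
      show ?thesis
        by (rule Ecase[where C = "NY" and C' = "NY'" and D = "NZ"]) (use inv_E[OF less.prems(1)] less.prems(2) 3 in \<open>auto simp: exprlike_def\<close>)
    qed
  next
    assume "exprlike A"
    then consider i where "A = NZi i" | "A = NZ" | "A = NS" unfolding exprlike_def by blast
    then show "re_expr (yield t) (sem t)"
    proof cases
      case (1 i) then show ?thesis using Zcase less.prems by blast
    next
      case 2 then show ?thesis using Zcase less.prems by blast
    next
      case 3
      have "root t = N NS" using less.prems(2) 3 by simp
      from inv_S[OF less.prems(1) this] show ?thesis
      proof (elim disjE exE conjE)
        fix p l assume p: "t = Node NS [Node NY [p]]" "valid k p" "root p = N (NP l)"
        then show ?thesis using less.hyps[of p "NP l"] by (simp add: termlike_def ex_term)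
      next
        fix z assume z: "t = Node NS [z]" "valid k z" "root z = N NZ"
        then show ?thesis using less.hyps[of z NZ] by (simp add: exprlike_def)
      qed
    qed
  qed
qed



definition der :: "nat \<Rightarrow> nat list set \<Rightarrow> nat list set" where
  "der a L = {w. a # w \<in> L}"

lemma kstar_single: "w \<in> kstar {[j]} \<longleftrightarrow> w = replicate (length w) j"
proof
  assume "w \<in> kstar {[j]}" then show "w = replicate (length w) j"
    by (induct rule: kstar.induct) auto
next
  assume "w = replicate (length w) j"
  then show "w \<in> kstar {[j]}"
  proof (induct w)
    case Nil then show ?case by (simp add: kstar.intros)
  next
    case (Cons a w)
    then have "w \<in> kstar {[j]}" "a = j" by auto
    then show ?case using kstar.intros(2)[of "[j]" "{[j]}" w] by simp
  qed
qed

lemma conc_single: "conc {[i]} X = (#) i ` X"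
  unfolding conc_def by auto

lemma conc_conc_single: "conc (conc {[i]} S) M = (#) i ` (conc S M)"
  by (subst conc_assoc) (rule conc_single)

lemma der_image: "der a ((#) i ` X) = (if a = i then X else {})"
  unfolding der_def by auto

lemma der_insert: "der a (insert [] X) = der a X"
  unfolding der_def by auto

lemma der_Union: "der a (\<Union>S) = \<Union>(der a ` S)"
  unfolding der_def by auto

lemma nil_kstar: "[] \<in> kstar {[j]}"
  by (simp add: kstar.intros)

lemma der_kstar: "der a (kstar {[j]}) = (if a = j then kstar {[j]} else {})"
  unfolding der_def by (auto simp: kstar_single)

lemma der_conc_kstar: "der a (conc (kstar {[j]}) M) = (if a = j then conc (kstar {[j]}) M \<union> der a M else der a M)"
proof -
  have "a # w \<in> conc (kstar {[j]}) M \<longleftrightarrow> (a = j \<and> w \<in> conc (kstar {[j]}) M) \<or> a # w \<in> M" for w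
  proof
    assume "a # w \<in> conc (kstar {[j]}) M"
    then obtain u v where uv: "a # w = u @ v" "u \<in> kstar {[j]}" "v \<in> M" unfolding conc_def by blast
    show "(a = j \<and> w \<in> conc (kstar {[j]}) M) \<or> a # w \<in> M"
    proof (cases u)
      case Nil then show ?thesis using uv by simp
    next
      case (Cons b u')
      then have "b = j" "u' \<in> kstar {[j]}" using uv(2) by (auto simp: kstar_single)
      then show ?thesis using uv Cons unfolding conc_def by auto
    qed
  next
    assume "(a = j \<and> w \<in> conc (kstar {[j]}) M) \<or> a # w \<in> M"
    then show "a # w \<in> conc (kstar {[j]}) M"
    proof
      assume h: "a = j \<and> w \<in> conc (kstar {[j]}) M"
      then obtain u v where "w = u @ v" "u \<in> kstar {[j]}" "v \<in> M" unfolding conc_def by blast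
      then have "a # w = (j # u) @ v" "j # u \<in> kstar {[j]}" using h by (auto simp: kstar_single)
      then show ?thesis using \<open>v \<in> M\<close> unfolding conc_def by blast
    next
      assume "a # w \<in> M"
      then show ?thesis using nil_kstar unfolding conc_def by force
    qed
  qed
  then show ?thesis unfolding der_def by auto
qed

lemma der_conc_kstar_same: "der j M = {} \<Longrightarrow> der j (conc (kstar {[j]}) M) = conc (kstar {[j]}) M"
  by (simp add: der_conc_kstar)

lemma der_conc_kstar_other: "a \<noteq> j \<Longrightarrow> der a (conc (kstar {[j]}) M) = der a M"
  by (simp add: der_conc_kstar)

lemma M_sub_conc: "M \<subseteq> conc (kstar {[j]}) M"
  using nil_kstar unfolding conc_def by force

lemma nil_conc_kstar: "[] \<in> conc (kstar {[j]}) M \<longleftrightarrow> [] \<in> M"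
  using nil_kstar unfolding conc_def by auto

lemma pre_props: "X \<noteq> {} \<Longrightarrow> (#) i ` X \<noteq> {} \<and> [] \<notin> (#) i ` X \<and> (\<forall>a. a \<noteq> i \<longrightarrow> der a ((#) i ` X) = {}) \<and> der i ((#) i ` X) \<noteq> {}"
  by (auto simp: der_image)

lemma pre_recover: "[] \<notin> L \<Longrightarrow> (\<forall>a. a \<noteq> i \<longrightarrow> der a L = {}) \<Longrightarrow> L = (#) i ` der i L"
  unfolding der_def
  apply (auto)
  by (metis (mono_tags, lifting) empty_iff list.exhaust mem_Collect_eq rev_image_eqI)

lemma der_nonempty_ne: "der a L \<noteq> {} \<Longrightarrow> L \<noteq> {}"
  unfolding der_def by auto

lemma shortest_contra: "X \<noteq> {} \<Longrightarrow> (\<forall>w\<in>X. \<exists>v\<in>X. length v < length w) \<Longrightarrow> False"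
proof -
  assume ne: "X \<noteq> {}" and h: "\<forall>w\<in>X. \<exists>v\<in>X. length v < length w"
  have "\<forall>n. \<forall>w\<in>X. length w \<noteq> n"
  proof
    fix n show "\<forall>w\<in>X. length w \<noteq> n"
      by (induct n rule: less_induct) (use h in fastforce)
  qed
  then show False using ne by blast
qed

lemma loop_contra1: "X \<noteq> {} \<Longrightarrow> X = (#) l ` X \<Longrightarrow> False"
  by (rule shortest_contra[of X]) (auto, metis imageE impossible_Cons le_refl length_Cons lessI)

lemma loop_contra2: "X \<noteq> {} \<Longrightarrow> X = conc (kstar {[j]}) ((#) l ` X) \<Longrightarrow> False"
proof (rule shortest_contra[of X])
  assume ne: "X \<noteq> {}" and eq: "X = conc (kstar {[j]}) ((#) l ` X)"
  show "\<forall>w\<in>X. \<exists>v\<in>X. length v < length w"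
  proof
    fix w assume "w \<in> X"
    then have "w \<in> conc (kstar {[j]}) ((#) l ` X)" using eq by blast
    then obtain u v where "w = u @ l # v" "v \<in> X" unfolding conc_def by blast
    then show "\<exists>v\<in>X. length v < length w" by (intro bexI[of _ v]) auto
  qed
qed



lemma Zstruct:
  assumes "valid k z" "root z = N B" "B = NZ \<or> B = NZi x"
  shows "\<exists>qs ns. z = Node B (sumt qs) \<and> length qs \<ge> 2 \<and> length ns = length qs
     \<and> (\<forall>m<length qs. root (qs!m) = N (NP' (ns!m))) \<and> sorted_wrt (<) ns \<and> distinct ns
     \<and> (\<forall>q\<in>set qs. valid k q \<and> size q < size z) \<and> sem z = \<Union>(sem ` set qs)
     \<and> (B = NZi x \<longrightarrow> x \<notin> set ns)"
proof -
  from inv_Z[OF assms] obtain qs ns where Z: "z = Node B (sumt qs)" "length qs \<ge> 2"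
    "map root qs = map (\<lambda>n. N (NP' n)) ns" "sorted_wrt (<) ns" "\<forall>q\<in>set qs. valid k q"
    "B = NZi x \<longrightarrow> x \<notin> set ns" by blast
  have len: "length ns = length qs" using arg_cong[OF Z(3), of length] by simp
  have roots: "\<forall>m<length qs. root (qs!m) = N (NP' (ns!m))"
  proof (intro allI impI)
    fix m assume "m < length qs"
    then show "root (qs!m) = N (NP' (ns!m))" using arg_cong[OF Z(3), of "\<lambda>xs. xs ! m"] len by simp
  qed
  have "distinct ns" using Z(4) by (simp add: strict_sorted_iff)
  moreover have "\<forall>q\<in>set qs. valid k q \<and> size q < size z" using Z(1,5) set_sumt[of qs] size_child by blast
  moreover have "sem z = \<Union>(sem ` set qs)" using Z(1) Zsem[OF Z(2,3)] by simp
  ultimately show ?thesis using Z len roots by blast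
qed

lemma INV:
  "valid k t \<Longrightarrow>
   (\<forall>i. (root t = N (NP i) \<or> root t = N (NP' i)) \<longrightarrow> sem t \<noteq> {} \<and> [] \<notin> sem t \<and> (\<forall>a. a \<noteq> i \<longrightarrow> der a (sem t) = {}) \<and> der i (sem t) \<noteq> {})
 \<and> (root t = N NE \<longrightarrow> (\<exists>a. der a (sem t) \<noteq> {}))
 \<and> (\<forall>x. root t = N (NEi x) \<longrightarrow> (\<exists>a. der a (sem t) \<noteq> {}) \<and> der x (sem t) = {})
 \<and> (\<forall>x B. root t = N B \<and> (B = NZ \<or> B = NZi x) \<longrightarrow> [] \<notin> sem t \<and> (\<exists>a b. a \<noteq> b \<and> der a (sem t) \<noteq> {} \<and> der b (sem t) \<noteq> {})
        \<and> (B = NZi x \<longrightarrow> der x (sem t) = {}))"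
proof (induct t rule: measure_induct_rule[of size])
  case (less t)
  have Ene: "sem e \<noteq> {}" "\<exists>a. der a (sem e) \<noteq> {}"
    if "valid k e" "size e < size t" "root e = N NE \<or> root e = N (NEi x)" for e x
    using less.hyps[OF that(2) that(1)] that(3) der_nonempty_ne by blast+
  have Pinv: "sem p \<noteq> {} \<and> [] \<notin> sem p \<and> (\<forall>a. a \<noteq> i \<longrightarrow> der a (sem p) = {}) \<and> der i (sem p) \<noteq> {}"
    if "valid k p" "size p < size t" "root p = N (NP i) \<or> root p = N (NP' i)" for p i
    using less.hyps[OF that(2) that(1)] that(3) by blast
  have Zinv: "[] \<notin> sem z \<and> (\<exists>a b. a \<noteq> b \<and> der a (sem z) \<noteq> {} \<and> der b (sem z) \<noteq> {}) \<and> (B = NZi x \<longrightarrow> der x (sem z) = {})"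
    if "valid k z" "size z < size t" "root z = N B" "B = NZ \<or> B = NZi x" for z B x
    using less.hyps[OF that(2) that(1)] that(3,4) by blast
  have P1: "\<forall>i. (root t = N (NP i) \<or> root t = N (NP' i)) \<longrightarrow> sem t \<noteq> {} \<and> [] \<notin> sem t \<and> (\<forall>a. a \<noteq> i \<longrightarrow> der a (sem t) = {}) \<and> der i (sem t) \<noteq> {}"
  proof (intro allI impI)
    fix i assume r: "root t = N (NP i) \<or> root t = N (NP' i)"
    from inv_P[OF less.prems r] obtain B where B: "root t = N B"
      "t = Node B [Leaf (Sym i)] \<or>
   (\<exists>e. t = Node B [Leaf (Sym i), e] \<and> valid k e \<and> root e = N NE) \<or>
   (\<exists>j. (B = NP' i \<longrightarrow> j \<noteq> i) \<and> t = Node B [Leaf (Sym i), Leaf (Sym j), Leaf Star]) \<or>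
   (\<exists>j e. (B = NP' i \<longrightarrow> j \<noteq> i) \<and> t = Node B [Leaf (Sym i), Leaf (Sym j), Leaf Star, e] \<and> valid k e \<and> root e = N (NEi j))"
      by blast
    have "\<exists>X. X \<noteq> {} \<and> sem t = (#) i ` X"
      using B(2)
    proof (elim disjE exE conjE)
      assume "t = Node B [Leaf (Sym i)]"
      then show ?thesis by (intro exI[of _ "{[]}"]) auto
    next
      fix e assume e: "t = Node B [Leaf (Sym i), e]" "valid k e" "root e = N NE"
      then have "sem e \<noteq> {}" using Ene[of e] size_child[of e] by fastforce
      then show ?thesis using e by (intro exI[of _ "sem e"]) (simp add: conc_single)
    next
      fix j assume e: "t = Node B [Leaf (Sym i), Leaf (Sym j), Leaf Star]"
      then show ?thesis using nil_kstar by (intro exI[of _ "kstar {[j]}"]) (auto simp: conc_single)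
    next
      fix j e assume e: "t = Node B [Leaf (Sym i), Leaf (Sym j), Leaf Star, e]" "valid k e" "root e = N (NEi j)"
      then have "sem e \<noteq> {}" using Ene[of e] size_child[of e] by fastforce
      then have "conc (kstar {[j]}) (sem e) \<noteq> {}" using M_sub_conc by blast
      then show ?thesis using e by (intro exI[of _ "conc (kstar {[j]}) (sem e)"]) (simp add: conc_conc_single)
    qed
    then show "sem t \<noteq> {} \<and> [] \<notin> sem t \<and> (\<forall>a. a \<noteq> i \<longrightarrow> der a (sem t) = {}) \<and> der i (sem t) \<noteq> {}"
      using pre_props by metis
  qed
  have P2: "root t = N NE \<longrightarrow> (\<exists>a. der a (sem t) \<noteq> {})"
  proof
    assume r: "root t = N NE"
    from inv_E[OF less.prems r] show "\<exists>a. der a (sem t) \<noteq> {}"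
    proof (elim disjE exE conjE)
      fix p l assume p: "t = Node NE [Node NY [p]]" "valid k p" "root p = N (NP l)"
      have "size p < size t" using p(1) size_child[of p "[p]"] size_child[of "Node NY [p]"] by fastforce
      then show ?thesis using Pinv[of p l] p by auto
    next
      fix z assume z: "t = Node NE [Leaf LP, z, Leaf RP]" "valid k z" "root z = N NZ"
      have "size z < size t" using z(1) size_child[of z] by fastforce
      then show ?thesis using Zinv[of z NZ] z by auto
    next
      fix p l assume p: "t = Node NE [Leaf LP, Leaf Eps, Leaf Plus, Node NY' [p], Leaf RP]" "valid k p" "root p = N (NP' l)"
      have "size p < size t" using p(1) size_child[of p "[p]"] size_child[of "Node NY' [p]"] by fastforce
      then show ?thesis using Pinv[of p l] p by (auto simp: der_insert)
    next
      fix z assume z: "t = Node NE [Leaf LP, Leaf Eps, Leaf Plus, z, Leaf RP]" "valid k z" "root z = N NZ"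
      have "size z < size t" using z(1) size_child[of z] by fastforce
      then show ?thesis using Zinv[of z NZ] z by (auto simp: der_insert)
    qed
  qed
  have P3: "\<forall>x. root t = N (NEi x) \<longrightarrow> (\<exists>a. der a (sem t) \<noteq> {}) \<and> der x (sem t) = {}"
  proof (intro allI impI)
    fix x assume r: "root t = N (NEi x)"
    from inv_Ei[OF less.prems r] show "(\<exists>a. der a (sem t) \<noteq> {}) \<and> der x (sem t) = {}"
    proof (elim disjE exE conjE)
      fix p l assume p: "l \<noteq> x" "t = Node (NEi x) [Node (NYi x) [p]]" "valid k p" "root p = N (NP l)"
      have "size p < size t" using p(2) size_child[of p "[p]"] size_child[of "Node (NYi x) [p]"] by fastforce
      then show ?thesis using Pinv[of p l] p by auto
    next
      fix z assume z: "t = Node (NEi x) [Leaf LP, z, Leaf RP]" "valid k z" "root z = N (NZi x)"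
      have "size z < size t" using z(1) size_child[of z] by fastforce
      then show ?thesis using Zinv[of z "NZi x" x] z by auto
    next
      fix p l assume p: "l \<noteq> x" "t = Node (NEi x) [Leaf LP, Leaf Eps, Leaf Plus, Node (NYi' x) [p], Leaf RP]" "valid k p" "root p = N (NP' l)"
      have "size p < size t" using p(2) size_child[of p "[p]"] size_child[of "Node (NYi' x) [p]"] by fastforce
      then show ?thesis using Pinv[of p l] p by (auto simp: der_insert)
    next
      fix z assume z: "t = Node (NEi x) [Leaf LP, Leaf Eps, Leaf Plus, z, Leaf RP]" "valid k z" "root z = N (NZi x)"
      have "size z < size t" using z(1) size_child[of z] by fastforce
      then show ?thesis using Zinv[of z "NZi x" x] z by (auto simp: der_insert)
    qed
  qed
  have P4: "\<forall>x B. root t = N B \<and> (B = NZ \<or> B = NZi x) \<longrightarrow> [] \<notin> sem t \<and> (\<exists>a b. a \<noteq> b \<and> der a (sem t) \<noteq> {} \<and> der b (sem t) \<noteq> {})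
        \<and> (B = NZi x \<longrightarrow> der x (sem t) = {})"
  proof (intro allI impI)
    fix x B assume r: "root t = N B \<and> (B = NZ \<or> B = NZi x)"
    from Zstruct[of k t B x] r less.prems obtain qs ns where Z: "t = Node B (sumt qs)" "length qs \<ge> 2" "length ns = length qs"
     "\<forall>m<length qs. root (qs!m) = N (NP' (ns!m))" "sorted_wrt (<) ns" "distinct ns"
     "\<forall>q\<in>set qs. valid k q \<and> size q < size t" "sem t = \<Union>(sem ` set qs)"
     "B = NZi x \<longrightarrow> x \<notin> set ns" by blast
    have qinv: "sem (qs!m) \<noteq> {} \<and> [] \<notin> sem (qs!m) \<and> (\<forall>a. a \<noteq> ns!m \<longrightarrow> der a (sem (qs!m)) = {}) \<and> der (ns!m) (sem (qs!m)) \<noteq> {}"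
      if "m < length qs" for m
      using Pinv[of "qs!m" "ns!m"] Z(4,7) that nth_mem by blast
    have "[] \<notin> sem t" using Z(8) qinv by (auto simp: in_set_conv_nth)
    moreover have "ns!0 \<noteq> ns!1"
    proof -
      have "0 < length ns" "1 < length ns" using Z(2,3) by auto
      from nth_eq_iff_index_eq[OF Z(6) this] show ?thesis by simp
    qed
    moreover have sub: "der a (sem (qs!m)) \<subseteq> der a (sem t)" if "m < length qs" for a m
      using Z(8) that nth_mem[OF that] unfolding der_def by blast
    moreover have "der (ns!0) (sem t) \<noteq> {}" "der (ns!1) (sem t) \<noteq> {}"
      using Z(2) qinv[of 0] qinv[of 1] sub[of 0] sub[of 1] by force+
    moreover have "B = NZi x \<longrightarrow> der x (sem t) = {}"
    proof
      assume "B = NZi x"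
      then have "\<forall>m<length qs. x \<noteq> ns!m" using Z(9,3) by (metis nth_mem)
      then show "der x (sem t) = {}" using Z(8) qinv by (auto simp: der_Union in_set_conv_nth)
    qed
    ultimately show "[] \<notin> sem t \<and> (\<exists>a b. a \<noteq> b \<and> der a (sem t) \<noteq> {} \<and> der b (sem t) \<noteq> {})
        \<and> (B = NZi x \<longrightarrow> der x (sem t) = {})" by blast
  qed
  show ?case using P1 P2 P3 P4 by blast
qed



lemma INV_P: "valid k p \<Longrightarrow> root p = N (NP i) \<or> root p = N (NP' i) \<Longrightarrow>
   sem p \<noteq> {} \<and> [] \<notin> sem p \<and> (\<forall>a. a \<noteq> i \<longrightarrow> der a (sem p) = {}) \<and> der i (sem p) \<noteq> {}"
  using INV by blast

lemma INV_P_recover: "valid k p \<Longrightarrow> root p = N (NP i) \<or> root p = N (NP' i) \<Longrightarrow> sem p = (#) i ` der i (sem p)"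
  using INV_P pre_recover by metis

lemma INV_E: "valid k e \<Longrightarrow> root e = N NE \<or> root e = N (NEi x) \<Longrightarrow> \<exists>a. der a (sem e) \<noteq> {}"
  using INV by blast

lemma INV_Ei: "valid k e \<Longrightarrow> root e = N (NEi x) \<Longrightarrow> der x (sem e) = {}"
  using INV by blast

lemma Zfull:
  assumes "valid k z" "root z = N B" "B = NZ \<or> B = NZi x"
  shows "\<exists>qs ns. z = Node B (sumt qs) \<and> length qs \<ge> 2 \<and> length ns = length qs
     \<and> (\<forall>m<length qs. root (qs!m) = N (NP' (ns!m))) \<and> sorted_wrt (<) ns \<and> distinct ns
     \<and> (\<forall>q\<in>set qs. valid k q \<and> size q < size z) \<and> [] \<notin> sem z
     \<and> (\<forall>a. der a (sem z) \<noteq> {} \<longleftrightarrow> a \<in> set ns)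
     \<and> (\<forall>m<length qs. der (ns!m) (sem z) = der (ns!m) (sem (qs!m)) \<and> sem (qs!m) = (#) (ns!m) ` der (ns!m) (sem z))"
proof -
  from Zstruct[OF assms] obtain qs ns where Z: "z = Node B (sumt qs)" "length qs \<ge> 2" "length ns = length qs"
     "\<forall>m<length qs. root (qs!m) = N (NP' (ns!m))" "sorted_wrt (<) ns" "distinct ns"
     "\<forall>q\<in>set qs. valid k q \<and> size q < size z" "sem z = \<Union>(sem ` set qs)" by blast
  have qinv: "sem (qs!m) \<noteq> {} \<and> [] \<notin> sem (qs!m) \<and> (\<forall>a. a \<noteq> ns!m \<longrightarrow> der a (sem (qs!m)) = {}) \<and> der (ns!m) (sem (qs!m)) \<noteq> {}"
    if "m < length qs" for m
    using INV_P[of k "qs!m" "ns!m"] Z(4,7) that nth_mem by blast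
  have sz: "sem z = (\<Union>m\<in>{m. m < length qs}. sem (qs!m))"
  proof -
    have "set qs = (\<lambda>m. qs!m) ` {m. m < length qs}" by (auto simp: in_set_conv_nth)
    then show ?thesis using Z(8) by simp
  qed
  have dz: "der a (sem z) = (\<Union>m\<in>{m. m < length qs}. der a (sem (qs!m)))" for a
    unfolding sz der_def by blast
  have nil: "[] \<notin> sem z" using Z(8) qinv by (auto simp: in_set_conv_nth)
  have d1: "der (ns!m) (sem z) = der (ns!m) (sem (qs!m))" if "m < length qs" for m
  proof -
    have "der (ns!m) (sem (qs!m')) = {}" if "m' < length qs" "m' \<noteq> m" for m'
    proof -
      have "ns!m' \<noteq> ns!m" using nth_eq_iff_index_eq[OF Z(6)] Z(3) that \<open>m < length qs\<close> by simp
      then show ?thesis using qinv[OF that(1)] by auto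
    qed
    then show ?thesis using dz[of "ns!m"] that by auto
  qed
  have d2: "der a (sem z) \<noteq> {} \<longleftrightarrow> a \<in> set ns" for a
  proof
    assume "der a (sem z) \<noteq> {}"
    then obtain m where "m < length qs" "der a (sem (qs!m)) \<noteq> {}" using dz by auto
    then have "a = ns!m" using qinv by blast
    then show "a \<in> set ns" using \<open>m < length qs\<close> Z(3) by simp
  next
    assume "a \<in> set ns"
    then obtain m where "m < length qs" "a = ns!m" using Z(3) by (auto simp: in_set_conv_nth)
    then show "der a (sem z) \<noteq> {}" using d1 qinv by auto
  qed
  have d3: "sem (qs!m) = (#) (ns!m) ` der (ns!m) (sem z)" if "m < length qs" for m
    using d1[OF that] pre_recover[of "sem (qs!m)" "ns!m"] qinv[OF that] by simp
  have D2: "\<forall>a. der a (sem z) \<noteq> {} \<longleftrightarrow> a \<in> set ns" using d2 by blast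
  have D13: "\<forall>m<length qs. der (ns!m) (sem z) = der (ns!m) (sem (qs!m)) \<and> sem (qs!m) = (#) (ns!m) ` der (ns!m) (sem z)"
    using d1 d3 by blast
  show ?thesis using Z(1-7) nil D2 D13 by (intro exI[of _ qs] exI[of _ ns] conjI) assumption+
qed

lemma Eshape:
  assumes "valid k e" "root e = N A" "A = NE \<or> A = NEi x"
  shows "(\<exists>p l C. e = Node A [Node C [p]] \<and> valid k p \<and> root p = N (NP l) \<and> (A = NEi x \<longrightarrow> l \<noteq> x)) \<or>
  (\<exists>z B. e = Node A [Leaf LP, z, Leaf RP] \<and> valid k z \<and> root z = N B \<and> (A = NE \<longrightarrow> B = NZ) \<and> (A = NEi x \<longrightarrow> B = NZi x)) \<or>
  (\<exists>p l C. e = Node A [Leaf LP, Leaf Eps, Leaf Plus, Node C [p], Leaf RP] \<and> valid k p \<and> root p = N (NP' l) \<and> (A = NEi x \<longrightarrow> l \<noteq> x)) \<or>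
  (\<exists>z B. e = Node A [Leaf LP, Leaf Eps, Leaf Plus, z, Leaf RP] \<and> valid k z \<and> root z = N B \<and> (A = NE \<longrightarrow> B = NZ) \<and> (A = NEi x \<longrightarrow> B = NZi x))"
  using assms(3)
proof
  assume "A = NE"
  then show ?thesis using inv_E[OF assms(1)] assms(2) by fastforce
next
  assume "A = NEi x"
  then show ?thesis using inv_Ei[OF assms(1)] assms(2) by fastforce
qed

lemma size_lt1: "size p < size (Node A [Node C [p]])"
  by simp
lemma size_lt2: "size z < size (Node A [Leaf LP, z, Leaf RP])"
  by simp
lemma size_lt3: "size p < size (Node A [Leaf LP, Leaf Eps, Leaf Plus, Node C [p], Leaf RP])"
  by simp
lemma size_lt4: "size z < size (Node A [Leaf LP, Leaf Eps, Leaf Plus, z, Leaf RP])"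
  by simp

lemma ECH:
  assumes "valid k e" "root e = N A" "A = NE \<or> A = NEi x" "der l (sem e) \<noteq> {}"
  shows "\<exists>c. size c < size e \<and> valid k c \<and> (root c = N (NP l) \<or> root c = N (NP' l)) \<and>
     der l (sem e) = der l (sem c) \<and> (root c = N (NP l) \<longrightarrow> sem e = sem c)"
  using Eshape[OF assms(1-3)]
proof (elim disjE exE conjE)
  fix p l' C assume p: "e = Node A [Node C [p]]" "valid k p" "root p = N (NP l')"
  then have "l = l'" using INV_P[of k p l'] assms(4) by auto
  then show ?thesis using p by (intro exI[of _ p]) auto
next
  fix z B assume z: "e = Node A [Leaf LP, z, Leaf RP]" "valid k z" "root z = N B" "A = NE \<longrightarrow> B = NZ" "A = NEi x \<longrightarrow> B = NZi x"
  have B: "B = NZ \<or> B = NZi x" using z assms(3) by blast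
  from Zfull[OF z(2,3) B] obtain qs ns where Z: "length ns = length qs"
     "\<forall>m<length qs. root (qs!m) = N (NP' (ns!m))"
     "\<forall>q\<in>set qs. valid k q \<and> size q < size z"
     "\<forall>a. der a (sem z) \<noteq> {} \<longleftrightarrow> a \<in> set ns"
     "\<forall>m<length qs. der (ns!m) (sem z) = der (ns!m) (sem (qs!m)) \<and> sem (qs!m) = (#) (ns!m) ` der (ns!m) (sem z)"
    by (elim exE conjE) (rule that; assumption)
  have "l \<in> set ns" using Z(4) assms(4) z(1) by simp
  then obtain m where m: "m < length qs" "l = ns!m" using Z(1) by (auto simp: in_set_conv_nth)
  have c1: "size (qs!m) < size e" using Z(3) nth_mem[OF m(1)] z(1) size_lt2[of z A] by fastforce
  have c2: "valid k (qs!m)" using Z(3) nth_mem[OF m(1)] by blast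
  have c3: "root (qs!m) = N (NP' l)" using Z(2) m by blast
  have c4: "der l (sem e) = der l (sem (qs!m))" using Z(5)[rule_format, OF m(1), THEN conjunct1] m(2) z(1) by simp
  show ?thesis using c1 c2 c3 c4 by (intro exI[of _ "qs!m"]) simp
next
  fix p l' C assume p: "e = Node A [Leaf LP, Leaf Eps, Leaf Plus, Node C [p], Leaf RP]" "valid k p" "root p = N (NP' l')"
  then have "l = l'" using INV_P[of k p l'] assms(4) by (auto simp: der_insert)
  then show ?thesis using p by (intro exI[of _ p]) (auto simp: der_insert)
next
  fix z B assume z: "e = Node A [Leaf LP, Leaf Eps, Leaf Plus, z, Leaf RP]" "valid k z" "root z = N B" "A = NE \<longrightarrow> B = NZ" "A = NEi x \<longrightarrow> B = NZi x"
  have B: "B = NZ \<or> B = NZi x" using z assms(3) by blast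
  from Zfull[OF z(2,3) B] obtain qs ns where Z: "length ns = length qs"
     "\<forall>m<length qs. root (qs!m) = N (NP' (ns!m))"
     "\<forall>q\<in>set qs. valid k q \<and> size q < size z"
     "\<forall>a. der a (sem z) \<noteq> {} \<longleftrightarrow> a \<in> set ns"
     "\<forall>m<length qs. der (ns!m) (sem z) = der (ns!m) (sem (qs!m)) \<and> sem (qs!m) = (#) (ns!m) ` der (ns!m) (sem z)"
    by (elim exE conjE) (rule that; assumption)
  have "l \<in> set ns" using Z(4) assms(4) z(1) by (simp add: der_insert)
  then obtain m where m: "m < length qs" "l = ns!m" using Z(1) by (auto simp: in_set_conv_nth)
  have c1: "size (qs!m) < size e" using Z(3) nth_mem[OF m(1)] z(1) size_lt4[of z A] by fastforce
  have c2: "valid k (qs!m)" using Z(3) nth_mem[OF m(1)] by blast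
  have c3: "root (qs!m) = N (NP' l)" using Z(2) m by blast
  have c4: "der l (sem e) = der l (sem (qs!m))" using Z(5)[rule_format, OF m(1), THEN conjunct1] m(2) z(1) by (simp add: der_insert)
  show ?thesis using c1 c2 c3 c4 by (intro exI[of _ "qs!m"]) simp
qed



lemma noloopP':
  assumes "valid k c" "root c = N (NP' l)"
    "c = Node B [Leaf (Sym l), Leaf (Sym l), Leaf Star] \<or> (\<exists>e. c = Node B [Leaf (Sym l), Leaf (Sym l), Leaf Star, e])"
  shows False
proof -
  have r: "root c = N (NP l) \<or> root c = N (NP' l)" using assms(2) by simp
  from inv_P[OF assms(1) r] obtain A where A: "root c = N A" "A = NP l \<or> A = NP' l"
   "c = Node A [Leaf (Sym l)] \<or>
   (\<exists>e. c = Node A [Leaf (Sym l), e] \<and> valid k e \<and> root e = N NE) \<or>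
   (\<exists>j. (A = NP' l \<longrightarrow> j \<noteq> l) \<and> c = Node A [Leaf (Sym l), Leaf (Sym j), Leaf Star]) \<or>
   (\<exists>j e. (A = NP' l \<longrightarrow> j \<noteq> l) \<and> c = Node A [Leaf (Sym l), Leaf (Sym j), Leaf Star, e] \<and> valid k e \<and> root e = N (NEi j))"
    by blast
  have "A = NP' l" using A(1) assms(2) by simp
  then show False using A(3) assms(3) by auto
qed

lemma tailT2: "der i (sem (Node B [Leaf (Sym i), e])) = sem e"
  by (simp add: conc_single der_image)
lemma tailT3: "der i (sem (Node B [Leaf (Sym i), Leaf (Sym j), Leaf Star])) = kstar {[j]}"
  by (simp add: conc_single der_image)
lemma tailT4: "der i (sem (Node B [Leaf (Sym i), Leaf (Sym j), Leaf Star, e])) = conc (kstar {[j]}) (sem e)"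
  by (simp add: conc_conc_single der_image)
lemma tailT1: "der i (sem (Node B [Leaf (Sym i)])) = {[]}"
  by (simp add: der_def)

lemma sem_ne_E: "valid k e \<Longrightarrow> root e = N NE \<or> root e = N (NEi x) \<Longrightarrow> sem e \<noteq> {}"
  using INV_E der_nonempty_ne by blast

lemma PC:
  "valid k t \<Longrightarrow> root t = N (NP i) \<or> root t = N (NP' i) \<Longrightarrow> der l (der i (sem t)) = der i (sem t) \<Longrightarrow>
   \<exists>B. t = Node B [Leaf (Sym i), Leaf (Sym l), Leaf Star] \<or> (\<exists>e. t = Node B [Leaf (Sym i), Leaf (Sym l), Leaf Star, e])"
proof (induct t arbitrary: i l rule: measure_induct_rule[of size])
  case (less t)
  have key: "sem e = (#) l ` der l (sem e)"
    if e: "valid k e" "root e = N A" "A = NE \<or> A = NEi x" "size e < size t" "der l X = X" "der l (sem e) = X" "X \<noteq> {}"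
    for e A x X
  proof -
    from ECH[OF e(1-3)] e(6,7) obtain c where c: "size c < size e" "valid k c" "root c = N (NP l) \<or> root c = N (NP' l)"
      "der l (sem e) = der l (sem c)" "root c = N (NP l) \<longrightarrow> sem e = sem c" by blast
    have "der l (der l (sem c)) = der l (sem c)" using c(4) e(5,6) by simp
    from less.hyps[of c l l] c(1,2,3) e(4) this obtain B where
      B: "c = Node B [Leaf (Sym l), Leaf (Sym l), Leaf Star] \<or> (\<exists>e. c = Node B [Leaf (Sym l), Leaf (Sym l), Leaf Star, e])"
      by fastforce
    have "root c = N (NP l)" using noloopP'[OF c(2) _ B] c(3) by blast
    then have "sem e = sem c" using c(5) by simp
    then show ?thesis using INV_P_recover[OF c(2) c(3)] c(4) by simp
  qed
  from inv_P[OF less.prems(1,2)] obtain B where B: "root t = N B"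
   "t = Node B [Leaf (Sym i)] \<or>
   (\<exists>e. t = Node B [Leaf (Sym i), e] \<and> valid k e \<and> root e = N NE) \<or>
   (\<exists>j. (B = NP' i \<longrightarrow> j \<noteq> i) \<and> t = Node B [Leaf (Sym i), Leaf (Sym j), Leaf Star]) \<or>
   (\<exists>j e. (B = NP' i \<longrightarrow> j \<noteq> i) \<and> t = Node B [Leaf (Sym i), Leaf (Sym j), Leaf Star, e] \<and> valid k e \<and> root e = N (NEi j))"
    by blast
  from B(2) show ?case
  proof (elim disjE exE conjE)
    assume t: "t = Node B [Leaf (Sym i)]"
    then show ?thesis using less.prems(3) tailT1[of i B] by (simp add: der_def)
  next
    fix e assume t: "t = Node B [Leaf (Sym i), e]" "valid k e" "root e = N NE"
    let ?X = "sem e"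
    have X: "der l ?X = ?X" using less.prems(3) t(1) tailT2[of i B e] by simp
    have ne: "?X \<noteq> {}" using sem_ne_E[OF t(2)] t(3) by blast
    have sz: "size e < size t" using t(1) by simp
    have "sem e = (#) l ` ?X" using key[OF t(2,3) _ sz X _ ne, of x] X by simp
    then show ?thesis using loop_contra1[OF ne] by blast
  next
    fix j assume t: "t = Node B [Leaf (Sym i), Leaf (Sym j), Leaf Star]"
    show ?thesis
    proof (cases "l = j")
      case True then show ?thesis using t by blast
    next
      case False
      then have "der l (kstar {[j]}) = {}" by (simp add: der_kstar)
      then show ?thesis using less.prems(3) t nil_kstar[of j] tailT3[of i B j] by simp
    qed
  next
    fix j e assume t: "t = Node B [Leaf (Sym i), Leaf (Sym j), Leaf Star, e]" "valid k e" "root e = N (NEi j)"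
    show ?thesis
    proof (cases "l = j")
      case True then show ?thesis using t by blast
    next
      case False
      let ?X = "conc (kstar {[j]}) (sem e)"
      have X: "der l ?X = ?X" using less.prems(3) t(1) tailT4[of i B j e] by simp
      have ne: "?X \<noteq> {}" using sem_ne_E[OF t(2)] t(3) M_sub_conc[of "sem e" j] by blast
      have d: "der l (sem e) = ?X" using X der_conc_kstar_other[OF False] by simp
      have sz: "size e < size t" using t(1) by simp
      have "sem e = (#) l ` ?X" using key[OF t(2,3) _ sz X d ne] d by simp
      then have "?X = conc (kstar {[j]}) ((#) l ` ?X)" by simp
      then show ?thesis using loop_contra2[OF ne] by blast
    qed
  qed
qed



lemma sorted_set_eq: "sorted_wrt (<) (xs::nat list) \<Longrightarrow> sorted_wrt (<) ys \<Longrightarrow> set xs = set ys \<Longrightarrow> xs = ys"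
  by (metis strict_sorted_iff sorted_distinct_set_unique)

lemma strip: "der j M = {} \<Longrightarrow> {w \<in> conc (kstar {[j]}) M. w = [] \<or> hd w \<noteq> j} = M"
proof (intro set_eqI iffI)
  fix w assume d: "der j M = {}" and "w \<in> {w \<in> conc (kstar {[j]}) M. w = [] \<or> hd w \<noteq> j}"
  then obtain u v where uv: "w = u @ v" "u \<in> kstar {[j]}" "v \<in> M" "w = [] \<or> hd w \<noteq> j"
    unfolding conc_def by blast
  have "u = []"
  proof (rule ccontr)
    assume "u \<noteq> []"
    then obtain u' where "u = j # u'" using uv(2) by (cases u) (auto simp: kstar_single)
    then show False using uv by simp
  qed
  then show "w \<in> M" using uv by simp
next
  fix w assume d: "der j M = {}" and w: "w \<in> M"
  have "w \<in> conc (kstar {[j]}) M" using w M_sub_conc by blast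
  moreover have "w = [] \<or> hd w \<noteq> j"
  proof (cases w)
    case (Cons a v) then show ?thesis using d w by (auto simp: der_def)
  qed simp
  ultimately show "w \<in> {w \<in> conc (kstar {[j]}) M. w = [] \<or> hd w \<noteq> j}" by blast
qed

lemma Zinj:
  assumes IH: "\<And>s s' n. size s < size za \<Longrightarrow> valid k s \<Longrightarrow> valid k s' \<Longrightarrow> root s = N (NP' n) \<Longrightarrow> root s' = N (NP' n) \<Longrightarrow> sem s = sem s' \<Longrightarrow> s = s'"
  and v: "valid k za" "valid k zb" "root za = N B" "root zb = N B" "B = NZ \<or> B = NZi x" and eq: "sem za = sem zb"
  shows "za = zb"
proof -
  from Zfull[OF v(1,3,5)] obtain qs1 ns1 where Z1: "za = Node B (sumt qs1)" "length ns1 = length qs1"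
     "\<forall>m<length qs1. root (qs1!m) = N (NP' (ns1!m))" "sorted_wrt (<) ns1"
     "\<forall>q\<in>set qs1. valid k q \<and> size q < size za"
     "\<forall>a. der a (sem za) \<noteq> {} \<longleftrightarrow> a \<in> set ns1"
     "\<forall>m<length qs1. der (ns1!m) (sem za) = der (ns1!m) (sem (qs1!m)) \<and> sem (qs1!m) = (#) (ns1!m) ` der (ns1!m) (sem za)"
    by (elim exE conjE) (rule that; assumption)
  from Zfull[OF v(2,4,5)] obtain qs2 ns2 where Z2: "zb = Node B (sumt qs2)" "length ns2 = length qs2"
     "\<forall>m<length qs2. root (qs2!m) = N (NP' (ns2!m))" "sorted_wrt (<) ns2"
     "\<forall>q\<in>set qs2. valid k q \<and> size q < size zb"
     "\<forall>a. der a (sem zb) \<noteq> {} \<longleftrightarrow> a \<in> set ns2"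
     "\<forall>m<length qs2. der (ns2!m) (sem zb) = der (ns2!m) (sem (qs2!m)) \<and> sem (qs2!m) = (#) (ns2!m) ` der (ns2!m) (sem zb)"
    by (elim exE conjE) (rule that; assumption)
  have "a \<in> set ns1 \<longleftrightarrow> a \<in> set ns2" for a
    using Z1(6)[THEN spec, of a] Z2(6)[THEN spec, of a] eq by simp
  then have "set ns1 = set ns2" by (intro set_eqI) simp
  then have ns: "ns1 = ns2" using sorted_set_eq Z1(4) Z2(4) by blast
  then have len: "length qs1 = length qs2" using Z1(2) Z2(2) by simp
  have "qs1 ! m = qs2 ! m" if m: "m < length qs1" for m
  proof -
    have m2: "m < length qs2" using m len by simp
    have s1: "sem (qs1!m) = (#) (ns1!m) ` der (ns1!m) (sem za)" using Z1(7)[rule_format, OF m, THEN conjunct2] .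
    have s2: "sem (qs2!m) = (#) (ns2!m) ` der (ns2!m) (sem zb)" using Z2(7)[rule_format, OF m2, THEN conjunct2] .
    have "sem (qs1!m) = sem (qs2!m)" using s1 s2 ns eq by simp
    moreover have "root (qs1!m) = N (NP' (ns1!m))" using Z1(3) m by blast
    moreover have "root (qs2!m) = N (NP' (ns1!m))" using Z2(3) m2 ns by blast
    moreover have "valid k (qs1!m)" "size (qs1!m) < size za" using Z1(5) nth_mem[OF m] by auto
    moreover have "valid k (qs2!m)" using Z2(5) nth_mem[OF m2] by blast
    ultimately show ?thesis using IH by blast
  qed
  then have "qs1 = qs2" using len by (simp add: nth_equalityI)
  then show ?thesis using Z1(1) Z2(1) by simp
qed

definition good :: "nt \<Rightarrow> bool" where
  "good A \<longleftrightarrow> A = NS \<or> A = NE \<or> (\<exists>x. A = NEi x \<or> A = NP x \<or> A = NP' x)"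

lemma tail_nontriv: "valid k e \<Longrightarrow> root e = N (NEi j) \<Longrightarrow> der j (conc (kstar {[j]}) (sem e)) \<noteq> {}"
  using der_conc_kstar_same[OF INV_Ei] sem_ne_E M_sub_conc by (metis subset_empty)

lemma Pinj:
  assumes IH: "\<And>s s' A. size s < size t1 \<Longrightarrow> valid k s \<Longrightarrow> valid k s' \<Longrightarrow> root s = N A \<Longrightarrow> root s' = N A \<Longrightarrow> (A = NE \<or> (\<exists>x. A = NEi x)) \<Longrightarrow> sem s = sem s' \<Longrightarrow> s = s'"
  and v: "valid k t1" "valid k t2" "root t1 = N A" "root t2 = N A" "A = NP i \<or> A = NP' i" and eq: "sem t1 = sem t2"
  shows "t1 = t2"
proof -
  have r1: "root t1 = N (NP i) \<or> root t1 = N (NP' i)" using v by blast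
  have r2: "root t2 = N (NP i) \<or> root t2 = N (NP' i)" using v by blast
  let ?F = "\<lambda>t. t = Node A [Leaf (Sym i)] \<or>
   (\<exists>e. t = Node A [Leaf (Sym i), e] \<and> valid k e \<and> root e = N NE) \<or>
   (\<exists>j. t = Node A [Leaf (Sym i), Leaf (Sym j), Leaf Star]) \<or>
   (\<exists>j e. t = Node A [Leaf (Sym i), Leaf (Sym j), Leaf Star, e] \<and> valid k e \<and> root e = N (NEi j))"
  have F1: "?F t1" using inv_P[OF v(1) r1] v(3) by fastforce
  have F2: "?F t2" using inv_P[OF v(2) r2] v(4) by fastforce
  have X: "der i (sem t1) = der i (sem t2)" using eq by simp
  have c1: False if "t = Node A [Leaf (Sym i)]" "t' \<noteq> t" "?F t'" "der i (sem t) = der i (sem t')" "valid k t'"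
    for t t'
  proof -
    have "\<exists>a. der a (der i (sem t')) \<noteq> {}"
      using \<open>?F t'\<close> that(2,1)
    proof (elim disjE exE conjE)
      fix e assume "t' = Node A [Leaf (Sym i), e]" "valid k e" "root e = N NE"
      then show ?thesis using INV_E[of k e] tailT2[of i A e] by auto
    next
      fix j assume "t' = Node A [Leaf (Sym i), Leaf (Sym j), Leaf Star]"
      then show ?thesis using tailT3[of i A j] nil_kstar[of j] der_kstar[of j j] by (intro exI[of _ j]) auto
    next
      fix j e assume "t' = Node A [Leaf (Sym i), Leaf (Sym j), Leaf Star, e]" "valid k e" "root e = N (NEi j)"
      then show ?thesis using tailT4[of i A j e] tail_nontriv by (intro exI[of _ j]) auto
    qed simp
    then show False using that(1,4) tailT1[of i A] by (auto simp: der_def)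
  qed
  have c2: False if "t = Node A [Leaf (Sym i), e]" "valid k t" "root t = N A" "valid k e" "root e = N NE"
       "der i (sem t) = der j (der i (sem t))" for t e j
  proof -
    have "root t = N (NP i) \<or> root t = N (NP' i)" using that(3) v(5) by blast
    from PC[OF that(2) this that(6)[symmetric]] show False using that(1) by auto
  qed
  have loop3: "der j (der i (sem t)) = der i (sem t)" if "t = Node A [Leaf (Sym i), Leaf (Sym j), Leaf Star]" for t j
    using that tailT3[of i A j] der_kstar[of j j] by simp
  have loop4: "der j (der i (sem t)) = der i (sem t)" if "t = Node A [Leaf (Sym i), Leaf (Sym j), Leaf Star, e]" "valid k e" "root e = N (NEi j)" for t j e
    using that tailT4[of i A j e] der_conc_kstar_same[OF INV_Ei[OF that(2,3)]] by simp
  have c3: False if h: "t = Node A [Leaf (Sym i), Leaf (Sym j), Leaf Star]" "valid k t" "root t = N A"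
      "t' = Node A [Leaf (Sym i), Leaf (Sym j'), Leaf Star, e']" "valid k e'" "root e' = N (NEi j')"
      "der i (sem t) = der i (sem t')" for t t' j j' e'
  proof -
    have "der j' (der i (sem t)) = der i (sem t)" using loop4[OF h(4-6)] h(7) by simp
    moreover have "root t = N (NP i) \<or> root t = N (NP' i)" using h(3) v(5) by blast
    ultimately have "j = j'" using PC[OF h(2)] h(1) by fastforce
    have sub: "sem e' \<subseteq> kstar {[j]}"
      using h(1,4,7) tailT3[of i A j] tailT4[of i A j' e'] M_sub_conc[of "sem e'" j'] \<open>j = j'\<close> by auto
    obtain a where a: "der a (sem e') \<noteq> {}" using INV_E[OF h(5)] h(6) by blast
    have "a \<noteq> j" using a INV_Ei[OF h(5,6)] \<open>j = j'\<close> by auto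
    then have "der a (kstar {[j]}) = {}" by (simp add: der_kstar)
    moreover have "der a (sem e') \<subseteq> der a (kstar {[j]})" using sub unfolding der_def by blast
    ultimately show False using a by blast
  qed
  from F1 show ?thesis
  proof (elim disjE exE conjE)
    assume t1: "t1 = Node A [Leaf (Sym i)]"
    show ?thesis using c1[OF t1 _ F2 X v(2)] by blast
  next
    fix e1 assume t1: "t1 = Node A [Leaf (Sym i), e1]" "valid k e1" "root e1 = N NE"
    from F2 show ?thesis
    proof (elim disjE exE conjE)
      assume t2: "t2 = Node A [Leaf (Sym i)]"
      show ?thesis using c1[OF t2 _ F1 X[symmetric] v(1)] by blast
    next
      fix e2 assume t2: "t2 = Node A [Leaf (Sym i), e2]" "valid k e2" "root e2 = N NE"
      have "sem e1 = sem e2" using X t1 t2 tailT2[of i A e1] tailT2[of i A e2] by simp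
      then have "e1 = e2" using IH[of e1 e2 NE] t1 t2 by simp
      then show ?thesis using t1 t2 by simp
    next
      fix j assume t2: "t2 = Node A [Leaf (Sym i), Leaf (Sym j), Leaf Star]"
      show ?thesis using c2[OF t1(1) v(1,3) t1(2,3), of j] loop3[OF t2] X by simp
    next
      fix j e2 assume t2: "t2 = Node A [Leaf (Sym i), Leaf (Sym j), Leaf Star, e2]" "valid k e2" "root e2 = N (NEi j)"
      show ?thesis using c2[OF t1(1) v(1,3) t1(2,3), of j] loop4[OF t2] X by simp
    qed
  next
    fix j1 assume t1: "t1 = Node A [Leaf (Sym i), Leaf (Sym j1), Leaf Star]"
    from F2 show ?thesis
    proof (elim disjE exE conjE)
      assume t2: "t2 = Node A [Leaf (Sym i)]"
      show ?thesis using c1[OF t2 _ F1 X[symmetric] v(1)] by blast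
    next
      fix e2 assume t2: "t2 = Node A [Leaf (Sym i), e2]" "valid k e2" "root e2 = N NE"
      show ?thesis using c2[OF t2(1) v(2,4) t2(2,3), of j1] loop3[OF t1] X by simp
    next
      fix j2 assume t2: "t2 = Node A [Leaf (Sym i), Leaf (Sym j2), Leaf Star]"
      have "kstar {[j1]} = kstar {[j2]}" using X t1 t2 tailT3[of i A j1] tailT3[of i A j2] by simp
      moreover have "[j1] \<in> kstar {[j1]}" by (simp add: kstar_single)
      ultimately have "[j1] \<in> kstar {[j2]}" by simp
      then have "j1 = j2" by (simp add: kstar_single)
      then show ?thesis using t1 t2 by simp
    next
      fix j2 e2 assume t2: "t2 = Node A [Leaf (Sym i), Leaf (Sym j2), Leaf Star, e2]" "valid k e2" "root e2 = N (NEi j2)"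
      show ?thesis using c3[OF t1 v(1,3) t2 X] by blast
    qed
  next
    fix j1 e1 assume t1: "t1 = Node A [Leaf (Sym i), Leaf (Sym j1), Leaf Star, e1]" "valid k e1" "root e1 = N (NEi j1)"
    from F2 show ?thesis
    proof (elim disjE exE conjE)
      assume t2: "t2 = Node A [Leaf (Sym i)]"
      show ?thesis using c1[OF t2 _ F1 X[symmetric] v(1)] by blast
    next
      fix e2 assume t2: "t2 = Node A [Leaf (Sym i), e2]" "valid k e2" "root e2 = N NE"
      show ?thesis using c2[OF t2(1) v(2,4) t2(2,3), of j1] loop4[OF t1] X by simp
    next
      fix j2 assume t2: "t2 = Node A [Leaf (Sym i), Leaf (Sym j2), Leaf Star]"
      show ?thesis using c3[OF t2 v(2,4) t1 X[symmetric]] by blast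
    next
      fix j2 e2 assume t2: "t2 = Node A [Leaf (Sym i), Leaf (Sym j2), Leaf Star, e2]" "valid k e2" "root e2 = N (NEi j2)"
      have "der j1 (der i (sem t2)) = der i (sem t2)" using loop4[OF t1] X by simp
      then have "j1 = j2" using PC[OF v(2) r2] t2(1) by fastforce
      have "conc (kstar {[j1]}) (sem e1) = conc (kstar {[j1]}) (sem e2)"
        using X t1 t2 tailT4[of i A j1 e1] tailT4[of i A j2 e2] \<open>j1 = j2\<close> by simp
      then have "sem e1 = sem e2"
        using strip[OF INV_Ei[OF t1(2,3)]] strip[OF INV_Ei[OF t2(2,3)]] \<open>j1 = j2\<close> by metis
      then have "e1 = e2" using IH[of e1 e2 "NEi j1"] t1 t2 \<open>j1 = j2\<close> by simp
      then show ?thesis using t1 t2 \<open>j1 = j2\<close> by simp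
    qed
  qed
qed



fun Ycon :: "nt \<Rightarrow> nt" where "Ycon (NEi x) = NYi x" | "Ycon _ = NY"
fun Y'con :: "nt \<Rightarrow> nt" where "Y'con (NEi x) = NYi' x" | "Y'con _ = NY'"
fun Zcon :: "nt \<Rightarrow> nt" where "Zcon (NEi x) = NZi x" | "Zcon _ = NZ"

lemma Eshape2:
  assumes "valid k e" "root e = N A" "A = NE \<or> A = NEi x"
  shows "(\<exists>p l. e = Node A [Node (Ycon A) [p]] \<and> valid k p \<and> root p = N (NP l)) \<or>
  (\<exists>z. e = Node A [Leaf LP, z, Leaf RP] \<and> valid k z \<and> root z = N (Zcon A)) \<or>
  (\<exists>p l. e = Node A [Leaf LP, Leaf Eps, Leaf Plus, Node (Y'con A) [p], Leaf RP] \<and> valid k p \<and> root p = N (NP' l)) \<or>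
  (\<exists>z. e = Node A [Leaf LP, Leaf Eps, Leaf Plus, z, Leaf RP] \<and> valid k z \<and> root z = N (Zcon A))"
  using assms(3)
proof
  assume "A = NE"
  then show ?thesis using inv_E[OF assms(1)] assms(2) by fastforce
next
  assume "A = NEi x"
  then show ?thesis using inv_Ei[OF assms(1)] assms(2) by fastforce
qed

lemma Zcon_ok: "A = NE \<or> A = NEi x \<Longrightarrow> Zcon A = NZ \<or> Zcon A = NZi x"
  by auto

definition multi :: "nat list set \<Rightarrow> bool" where
  "multi L \<longleftrightarrow> (\<exists>a b. a \<noteq> b \<and> der a L \<noteq> {} \<and> der b L \<noteq> {})"

lemma Z_multi: "valid k z \<Longrightarrow> root z = N B \<Longrightarrow> B = NZ \<or> B = NZi x \<Longrightarrow> multi (sem z) \<and> [] \<notin> sem z"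
  using INV[of k z] unfolding multi_def by blast

lemma P_single: "valid k p \<Longrightarrow> root p = N (NP l) \<or> root p = N (NP' l) \<Longrightarrow> \<not> multi (sem p) \<and> [] \<notin> sem p \<and> der l (sem p) \<noteq> {}"
  using INV_P[of k p l] unfolding multi_def by metis

lemma P_letter: "valid k p \<Longrightarrow> root p = N (NP l) \<or> root p = N (NP' l) \<Longrightarrow> der a (sem p) \<noteq> {} \<Longrightarrow> a = l"
  using INV_P[of k p l] by metis

lemma multi_insert: "multi (insert [] L) = multi L"
  unfolding multi_def by (simp add: der_insert)

lemma insert_nil_inj: "[] \<notin> A \<Longrightarrow> [] \<notin> B \<Longrightarrow> insert [] A = insert [] B \<Longrightarrow> A = B"
  by (metis Diff_insert_absorb)

lemma Einj:
  assumes IH: "\<And>s s' A. size s < size t1 \<Longrightarrow> valid k s \<Longrightarrow> valid k s' \<Longrightarrow> root s = N A \<Longrightarrow> root s' = N A \<Longrightarrow> (\<exists>x. A = NP x \<or> A = NP' x) \<Longrightarrow> sem s = sem s' \<Longrightarrow> s = s'"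
  and v: "valid k t1" "valid k t2" "root t1 = N A" "root t2 = N A" "A = NE \<or> A = NEi x" and eq: "sem t1 = sem t2"
  shows "t1 = t2"
proof -
  have ZB: "Zcon A = NZ \<or> Zcon A = NZi x" using v(5) by auto
  have IHZ: "\<And>s s' n. size s < size z \<Longrightarrow> valid k s \<Longrightarrow> valid k s' \<Longrightarrow> root s = N (NP' n) \<Longrightarrow> root s' = N (NP' n) \<Longrightarrow> sem s = sem s' \<Longrightarrow> s = s'"
    if "size z < size t1" for z
    using IH that by (metis order.strict_trans)
  from Eshape2[OF v(1,3,5)] show ?thesis
  proof (elim disjE exE conjE)
    fix p1 l1 assume t1: "t1 = Node A [Node (Ycon A) [p1]]" "valid k p1" "root p1 = N (NP l1)"
    have s1: "sem t1 = sem p1" using t1 by simp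
    have P1: "\<not> multi (sem p1) \<and> [] \<notin> sem p1 \<and> der l1 (sem p1) \<noteq> {}" using P_single[OF t1(2)] t1(3) by blast
    from Eshape2[OF v(2,4,5)] show ?thesis
    proof (elim disjE exE conjE)
      fix p2 l2 assume t2: "t2 = Node A [Node (Ycon A) [p2]]" "valid k p2" "root p2 = N (NP l2)"
      have "sem p1 = sem p2" using eq t1 t2 by simp
      then have "l1 = l2" using P1 P_letter[OF t2(2)] t2(3) by metis
      then have "p1 = p2" using IH[of p1 p2 "NP l1"] t1 t2 \<open>sem p1 = sem p2\<close> by simp
      then show ?thesis using t1 t2 by simp
    next
      fix z2 assume t2: "t2 = Node A [Leaf LP, z2, Leaf RP]" "valid k z2" "root z2 = N (Zcon A)"
      show ?thesis using Z_multi[OF t2(2,3) ZB] P1 eq t1 t2 by (simp; blast)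
    next
      fix p2 l2 assume t2: "t2 = Node A [Leaf LP, Leaf Eps, Leaf Plus, Node (Y'con A) [p2], Leaf RP]" "valid k p2" "root p2 = N (NP' l2)"
      show ?thesis using P1 eq t1 t2 by (simp; blast)
    next
      fix z2 assume t2: "t2 = Node A [Leaf LP, Leaf Eps, Leaf Plus, z2, Leaf RP]" "valid k z2" "root z2 = N (Zcon A)"
      show ?thesis using P1 eq t1 t2 by (simp; blast)
    qed
  next
    fix z1 assume t1: "t1 = Node A [Leaf LP, z1, Leaf RP]" "valid k z1" "root z1 = N (Zcon A)"
    have Z1: "multi (sem z1) \<and> [] \<notin> sem z1" using Z_multi[OF t1(2,3) ZB] .
    from Eshape2[OF v(2,4,5)] show ?thesis
    proof (elim disjE exE conjE)
      fix p2 l2 assume t2: "t2 = Node A [Node (Ycon A) [p2]]" "valid k p2" "root p2 = N (NP l2)"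
      show ?thesis using P_single[OF t2(2)] t2(3) Z1 eq t1 t2 by (simp; blast)
    next
      fix z2 assume t2: "t2 = Node A [Leaf LP, z2, Leaf RP]" "valid k z2" "root z2 = N (Zcon A)"
      have "sem z1 = sem z2" using eq t1 t2 by simp
      have sz: "size z1 < size t1" using t1(1) by simp
      have IHz1: "s = s'" if "size s < size z1" "valid k s" "valid k s'" "root s = N (NP' n)" "root s' = N (NP' n)" "sem s = sem s'" for s s' n
        by (rule IH[of s s' "NP' n"]) (use that sz in auto)
      have "z1 = z2"
      proof (rule Zinj[where za=z1 and zb=z2 and B="Zcon A" and x="x" and k=k])
        fix s s' n assume "size s < size z1" "valid k s" "valid k s'" "root s = N (NP' n)" "root s' = N (NP' n)" "sem s = sem s'"
        then show "s = s'" by (rule IHz1)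
      qed (use t1 t2 ZB \<open>sem z1 = sem z2\<close> in auto)
      then show ?thesis using t1 t2 by simp
    next
      fix p2 l2 assume t2: "t2 = Node A [Leaf LP, Leaf Eps, Leaf Plus, Node (Y'con A) [p2], Leaf RP]" "valid k p2" "root p2 = N (NP' l2)"
      show ?thesis using Z1 eq t1 t2 by (simp; blast)
    next
      fix z2 assume t2: "t2 = Node A [Leaf LP, Leaf Eps, Leaf Plus, z2, Leaf RP]" "valid k z2" "root z2 = N (Zcon A)"
      show ?thesis using Z1 eq t1 t2 by (simp; blast)
    qed
  next
    fix p1 l1 assume t1: "t1 = Node A [Leaf LP, Leaf Eps, Leaf Plus, Node (Y'con A) [p1], Leaf RP]" "valid k p1" "root p1 = N (NP' l1)"
    have P1: "\<not> multi (sem p1) \<and> [] \<notin> sem p1 \<and> der l1 (sem p1) \<noteq> {}" using P_single[OF t1(2)] t1(3) by blast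
    from Eshape2[OF v(2,4,5)] show ?thesis
    proof (elim disjE exE conjE)
      fix p2 l2 assume t2: "t2 = Node A [Node (Ycon A) [p2]]" "valid k p2" "root p2 = N (NP l2)"
      show ?thesis using P_single[OF t2(2)] t2(3) eq t1 t2 by (simp; blast)
    next
      fix z2 assume t2: "t2 = Node A [Leaf LP, z2, Leaf RP]" "valid k z2" "root z2 = N (Zcon A)"
      show ?thesis using Z_multi[OF t2(2,3) ZB] eq t1 t2 by (simp; blast)
    next
      fix p2 l2 assume t2: "t2 = Node A [Leaf LP, Leaf Eps, Leaf Plus, Node (Y'con A) [p2], Leaf RP]" "valid k p2" "root p2 = N (NP' l2)"
      have "insert [] (sem p1) = insert [] (sem p2)" using eq t1 t2 by simp
      then have "sem p1 = sem p2" using P1 P_single[OF t2(2)] t2(3) insert_nil_inj by blast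
      then have "l1 = l2" using P1 P_letter[OF t2(2)] t2(3) by metis
      then have "p1 = p2" using IH[of p1 p2 "NP' l1"] t1 t2 \<open>sem p1 = sem p2\<close> by simp
      then show ?thesis using t1 t2 by simp
    next
      fix z2 assume t2: "t2 = Node A [Leaf LP, Leaf Eps, Leaf Plus, z2, Leaf RP]" "valid k z2" "root z2 = N (Zcon A)"
      have "multi (insert [] (sem z2))" using Z_multi[OF t2(2,3) ZB] by (simp add: multi_insert)
      moreover have "\<not> multi (insert [] (sem p1))" using P1 by (simp add: multi_insert)
      ultimately show ?thesis using eq t1 t2 by (simp; blast)
    qed
  next
    fix z1 assume t1: "t1 = Node A [Leaf LP, Leaf Eps, Leaf Plus, z1, Leaf RP]" "valid k z1" "root z1 = N (Zcon A)"
    have Z1: "multi (sem z1) \<and> [] \<notin> sem z1" using Z_multi[OF t1(2,3) ZB] .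
    from Eshape2[OF v(2,4,5)] show ?thesis
    proof (elim disjE exE conjE)
      fix p2 l2 assume t2: "t2 = Node A [Node (Ycon A) [p2]]" "valid k p2" "root p2 = N (NP l2)"
      show ?thesis using P_single[OF t2(2)] t2(3) eq t1 t2 by (simp; blast)
    next
      fix z2 assume t2: "t2 = Node A [Leaf LP, z2, Leaf RP]" "valid k z2" "root z2 = N (Zcon A)"
      show ?thesis using Z_multi[OF t2(2,3) ZB] eq t1 t2 by (simp; blast)
    next
      fix p2 l2 assume t2: "t2 = Node A [Leaf LP, Leaf Eps, Leaf Plus, Node (Y'con A) [p2], Leaf RP]" "valid k p2" "root p2 = N (NP' l2)"
      have "\<not> multi (insert [] (sem p2))" using P_single[OF t2(2)] t2(3) by (simp add: multi_insert)
      moreover have "multi (insert [] (sem z1))" using Z1 by (simp add: multi_insert)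
      ultimately show ?thesis using eq t1 t2 by (simp; blast)
    next
      fix z2 assume t2: "t2 = Node A [Leaf LP, Leaf Eps, Leaf Plus, z2, Leaf RP]" "valid k z2" "root z2 = N (Zcon A)"
      have "insert [] (sem z1) = insert [] (sem z2)" using eq t1 t2 by simp
      then have "sem z1 = sem z2" using Z1 Z_multi[OF t2(2,3) ZB] insert_nil_inj by blast
      have sz: "size z1 < size t1" using t1(1) by simp
      have IHz1: "s = s'" if "size s < size z1" "valid k s" "valid k s'" "root s = N (NP' n)" "root s' = N (NP' n)" "sem s = sem s'" for s s' n
        by (rule IH[of s s' "NP' n"]) (use that sz in auto)
      have "z1 = z2"
      proof (rule Zinj[where za=z1 and zb=z2 and B="Zcon A" and x="x" and k=k])
        fix s s' n assume "size s < size z1" "valid k s" "valid k s'" "root s = N (NP' n)" "root s' = N (NP' n)" "sem s = sem s'"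
        then show "s = s'" by (rule IHz1)
      qed (use t1 t2 ZB \<open>sem z1 = sem z2\<close> in auto)
      then show ?thesis using t1 t2 by simp
    qed
  qed
qed

lemma Sinj:
  assumes IH: "\<And>s s' A. size s < size t1 \<Longrightarrow> valid k s \<Longrightarrow> valid k s' \<Longrightarrow> root s = N A \<Longrightarrow> root s' = N A \<Longrightarrow> (\<exists>x. A = NP x \<or> A = NP' x) \<Longrightarrow> sem s = sem s' \<Longrightarrow> s = s'"
  and v: "valid k t1" "valid k t2" "root t1 = N NS" "root t2 = N NS" and eq: "sem t1 = sem t2"
  shows "t1 = t2"
proof -
  have ZB: "NZ = NZ \<or> NZ = NZi 0" by simp
  have IHZ: "\<And>s s' n. size s < size z \<Longrightarrow> valid k s \<Longrightarrow> valid k s' \<Longrightarrow> root s = N (NP' n) \<Longrightarrow> root s' = N (NP' n) \<Longrightarrow> sem s = sem s' \<Longrightarrow> s = s'"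
    if "size z < size t1" for z
    using IH that by (metis order.strict_trans)
  from inv_S[OF v(1,3)] show ?thesis
  proof (elim disjE exE conjE)
    fix p1 l1 assume t1: "t1 = Node NS [Node NY [p1]]" "valid k p1" "root p1 = N (NP l1)"
    have P1: "\<not> multi (sem p1) \<and> [] \<notin> sem p1 \<and> der l1 (sem p1) \<noteq> {}" using P_single[OF t1(2)] t1(3) by blast
    from inv_S[OF v(2,4)] show ?thesis
    proof (elim disjE exE conjE)
      fix p2 l2 assume t2: "t2 = Node NS [Node NY [p2]]" "valid k p2" "root p2 = N (NP l2)"
      have "sem p1 = sem p2" using eq t1 t2 by simp
      then have "l1 = l2" using P1 P_letter[OF t2(2)] t2(3) by metis
      then have "p1 = p2" using IH[of p1 p2 "NP l1"] t1 t2 \<open>sem p1 = sem p2\<close> by simp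
      then show ?thesis using t1 t2 by simp
    next
      fix z2 assume t2: "t2 = Node NS [z2]" "valid k z2" "root z2 = N NZ"
      show ?thesis using Z_multi[OF t2(2,3) ZB] P1 eq t1 t2 by (simp; blast)
    qed
  next
    fix z1 assume t1: "t1 = Node NS [z1]" "valid k z1" "root z1 = N NZ"
    have Z1: "multi (sem z1) \<and> [] \<notin> sem z1" using Z_multi[OF t1(2,3) ZB] .
    from inv_S[OF v(2,4)] show ?thesis
    proof (elim disjE exE conjE)
      fix p2 l2 assume t2: "t2 = Node NS [Node NY [p2]]" "valid k p2" "root p2 = N (NP l2)"
      show ?thesis using P_single[OF t2(2)] t2(3) Z1 eq t1 t2 by (simp; blast)
    next
      fix z2 assume t2: "t2 = Node NS [z2]" "valid k z2" "root z2 = N NZ"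
      have "sem z1 = sem z2" using eq t1 t2 by simp
      have sz: "size z1 < size t1" using t1(1) by simp
      have IHz1: "s = s'" if "size s < size z1" "valid k s" "valid k s'" "root s = N (NP' n)" "root s' = N (NP' n)" "sem s = sem s'" for s s' n
        by (rule IH[of s s' "NP' n"]) (use that sz in auto)
      have "z1 = z2"
      proof (rule Zinj[where za=z1 and zb=z2 and B="NZ" and x="0" and k=k])
        fix s s' n assume "size s < size z1" "valid k s" "valid k s'" "root s = N (NP' n)" "root s' = N (NP' n)" "sem s = sem s'"
        then show "s = s'" by (rule IHz1)
      qed (use t1 t2 ZB \<open>sem z1 = sem z2\<close> in auto)
      then show ?thesis using t1 t2 by simp
    qed
  qed
qed

lemma INJ:
  "valid k t1 \<Longrightarrow> valid k t2 \<Longrightarrow> root t1 = N A \<Longrightarrow> root t2 = N A \<Longrightarrow> good A \<Longrightarrow> sem t1 = sem t2 \<Longrightarrow> t1 = t2"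
proof (induct t1 arbitrary: t2 A rule: measure_induct_rule[of size])
  case (less t1)
  have IH: "\<And>s s' B. size s < size t1 \<Longrightarrow> valid k s \<Longrightarrow> valid k s' \<Longrightarrow> root s = N B \<Longrightarrow> root s' = N B \<Longrightarrow> good B \<Longrightarrow> sem s = sem s' \<Longrightarrow> s = s'"
    using less.hyps by blast
  from less.prems(5) consider "A = NS" | "A = NE" | x where "A = NEi x" | x where "A = NP x \<or> A = NP' x"
    unfolding good_def by blast
  then show ?case
  proof cases
    case 1
    show ?thesis by (rule Sinj[OF _ less.prems(1,2)]) (use IH less.prems 1 in \<open>auto simp: good_def\<close>)
  next
    case 2
    show ?thesis by (rule Einj[OF _ less.prems(1-4), of x]) (use IH less.prems 2 in \<open>auto simp: good_def\<close>)
  next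
    case (3 x)
    show ?thesis by (rule Einj[OF _ less.prems(1-4), of x]) (use IH less.prems 3 in \<open>auto simp: good_def\<close>)
  next
    case (4 x)
    show ?thesis by (rule Pinj[OF _ less.prems(1-4), of x]) (use IH less.prems 4 in \<open>auto simp: good_def\<close>)
  qed
qed

theorem mainTheorem3:
  fixes k :: nat
  assumes "k \<ge> 1"
  shows "unambiguous k
    \<and> (\<forall>w. generates k w \<longrightarrow> (\<exists>L. re_expr w L))
    \<and> (\<forall>w1 w2 L1 L2. generates k w1 \<and> generates k w2 \<and> w1 \<noteq> w2
          \<and> re_expr w1 L1 \<and> re_expr w2 L2 \<longrightarrow> L1 \<noteq> L2)"
proof -
  have ok: "re_expr (yield t) (sem t)" if "valid k t" "root t = N NS" for t
    using re_ok[OF that] by (simp add: exprlike_def)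
  have inj: "t1 = t2" if "valid k t1" "valid k t2" "root t1 = N NS" "root t2 = N NS" "sem t1 = sem t2" for t1 t2
    using INJ[OF that(1,2,3,4) _ that(5)] by (simp add: good_def)
  have U: "unambiguous k"
    unfolding unambiguous_def
  proof (intro allI impI, elim conjE)
    fix t1 t2 assume h: "valid k t1" "valid k t2" "root t1 = N NS" "root t2 = N NS" "yield t1 = yield t2"
    have "sem t1 = sem t2" using ok[OF h(1,3)] ok[OF h(2,4)] h(5) re_expr_fun by metis
    then show "t1 = t2" using inj h by blast
  qed
  have G: "\<forall>w. generates k w \<longrightarrow> (\<exists>L. re_expr w L)"
    unfolding generates_def using ok by blast
  have D: "\<forall>w1 w2 L1 L2. generates k w1 \<and> generates k w2 \<and> w1 \<noteq> w2
          \<and> re_expr w1 L1 \<and> re_expr w2 L2 \<longrightarrow> L1 \<noteq> L2"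
  proof (intro allI impI, elim conjE)
    fix w1 w2 L1 L2 assume h: "generates k w1" "generates k w2" "w1 \<noteq> w2" "re_expr w1 L1" "re_expr w2 L2"
    from h(1) obtain t1 where t1: "valid k t1" "root t1 = N NS" "yield t1 = w1" unfolding generates_def by blast
    from h(2) obtain t2 where t2: "valid k t2" "root t2 = N NS" "yield t2 = w2" unfolding generates_def by blast
    have "L1 = sem t1" using re_expr_fun[OF ok[OF t1(1,2)]] t1(3) h(4) by simp
    moreover have "L2 = sem t2" using re_expr_fun[OF ok[OF t2(1,2)]] t2(3) h(5) by simp
    ultimately show "L1 \<noteq> L2" using inj[OF t1(1) t2(1) t1(2) t2(2)] t1(3) t2(3) h(3) by auto
  qed
  show ?thesis using U G D by blast
qed


end
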